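(* Fix $\tau\in(V_{j-1},V_j)$ for some $1\le j\le n$. For all sufficiently large $\chi$, the function $S_{\tau,\chi}$ has no non-real critical points if $\beta_j=\pm1$, and exactly two non-real critical points, which are complex conjugates of each other, if $\beta_j\neq\pm1$.
   Context: Let $V_0<V_1<\dots<V_n$, $\beta_1,\dots,\beta_n\in[-1,1]$, $\beta_0:=-1$, $\beta_{n+1}:=1$, with $\beta_i\ne\beta_{i+1}$ for all $0\le i\le n$. Let $V:[V_0,V_n]\to\mathbb R$ be continuous and linear with slope $\beta_i$ on $[V_{i-1},V_i]$. For $\tau\in[V_0,V_n]$, $\chi\in\mathbb R$ and $z\in\mathbb C\setminus\mathbb R$ define $$S_{\tau,\chi}(z)=\int_{V_0}^{\tau}\tfrac12(1+V'(M))\ln(1-e^{M}z^{-1})\,dM-\int_{\tau}^{V_n}\tfrac12(1-V'(M))\ln(1-e^{-M}z)\,dM-\big(\chi-\tfrac12V(\tau)\big)\ln z,$$ with $\ln$ the principal branch. A non-real critical point of $S_{\tau,\chi}$ is a $z\in\mathbb C\setminus\mathbb R$ with $S_{\tau,\chi}'(z)=0$. *)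

theory Defs
  imports "HOL-Analysis.Analysis"
begin

definition pl_setting ::
  "nat \<Rightarrow> (nat \<Rightarrow> real) \<Rightarrow> (nat \<Rightarrow> real) \<Rightarrow> (real \<Rightarrow> real) \<Rightarrow> bool" where
  "pl_setting n Vs beta V \<longleftrightarrow>
     (\<forall>i<n. Vs i < Vs (Suc i)) \<and>
     (\<forall>i\<in>{1..n}. beta i \<in> {-1..1}) \<and>
     beta 0 = -1 \<and> beta (Suc n) = 1 \<and>
     (\<forall>i\<le>n. beta i \<noteq> beta (Suc i)) \<and>
     (\<forall>i\<in>{1..n}. \<forall>M\<in>{Vs (i-1)..Vs i}. V M = V (Vs (i-1)) + beta i * (M - Vs (i-1)))"

text \<open>The action S_{tau,chi}(z); Ln is the principal branch of the complex logarithm,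
  and V' is the derivative of V (defined away from the finitely many breakpoints).\<close>

definition S_fun ::
  "nat \<Rightarrow> (nat \<Rightarrow> real) \<Rightarrow> (real \<Rightarrow> real) \<Rightarrow> real \<Rightarrow> real \<Rightarrow> complex \<Rightarrow> complex" where
  "S_fun n Vs V tau chi z =
     integral {Vs 0..tau}
       (\<lambda>M. complex_of_real ((1 + deriv V M) / 2) * Ln (1 - exp (complex_of_real M) / z))
   - integral {tau..Vs n}
       (\<lambda>M. complex_of_real ((1 - deriv V M) / 2) * Ln (1 - exp (- complex_of_real M) * z))
   - complex_of_real (chi - V tau / 2) * Ln z"

definition nonreal_crit_points ::
  "nat \<Rightarrow> (nat \<Rightarrow> real) \<Rightarrow> (real \<Rightarrow> real) \<Rightarrow> real \<Rightarrow> real \<Rightarrow> complex set" where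
  "nonreal_crit_points n Vs V tau chi =
     {z. Im z \<noteq> 0 \<and> (S_fun n Vs V tau chi has_field_derivative 0) (at z)}"

end

theory Submission
  imports Defs "HOL-Analysis.Analysis"
begin


lemma Im_Ln_pos_bounds:
  assumes "Im u > 0" shows "0 < Im (Ln u)" "Im (Ln u) < pi"
proof -
  have u0: "u \<noteq> 0" using assms by auto
  have nr: "u \<notin> \<real>\<^sub>\<le>\<^sub>0" using assms by (auto simp: complex_nonpos_Reals_iff)
  have "sin (Arg u) = Im u / norm u" using sin_Arg u0 by blast
  hence s: "sin (Im (Ln u)) > 0" using assms u0 by (simp add: Arg_eq_Im_Ln)
  show "Im (Ln u) < pi" using Im_Ln_less_pi[OF nr] .
  show "0 < Im (Ln u)"
  proof (rule ccontr)
    assume "\<not> 0 < Im (Ln u)"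
    hence "Im (Ln u) \<le> 0" by simp
    moreover have "- pi < Im (Ln u)" using mpi_less_Im_Ln u0 by blast
    ultimately have "0 \<le> sin (- Im (Ln u))" by (intro sin_ge_zero) auto
    hence "sin (Im (Ln u)) \<le> 0" by simp
    thus False using s by simp
  qed
qed

lemma Im_Ln_sin: assumes "u \<noteq> 0" shows "sin (Im (Ln u)) = Im u / norm u"
  using sin_Arg[OF assms] by (simp add: Arg_eq_Im_Ln[OF assms])

lemma Im_Ln_lower:
  assumes "Im u > 0" shows "Im u / norm u \<le> Im (Ln u)" "Im u / norm u \<le> pi - Im (Ln u)"
proof -
  have u0: "u \<noteq> 0" using assms by auto
  have b: "0 < Im (Ln u)" "Im (Ln u) < pi" using Im_Ln_pos_bounds[OF assms] by auto
  show "Im u / norm u \<le> Im (Ln u)"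
    using Im_Ln_sin[OF u0] sin_x_le_x[of "Im (Ln u)"] b by simp
  have "sin (pi - Im (Ln u)) = Im u / norm u" using Im_Ln_sin[OF u0] by simp
  thus "Im u / norm u \<le> pi - Im (Ln u)"
    using sin_x_le_x[of "pi - Im (Ln u)"] b by simp
qed

lemma Im_Ln_upper_right:
  assumes "Im u > 0" "Re u > 0" shows "Im (Ln u) \<le> Im u / Re u"
proof -
  have u0: "u \<noteq> 0" using assms by auto
  have "Im (Ln u) = arctan (Im u / Re u)"
    using arg_conv_arctan[OF assms(2)] Arg_eq_Im_Ln[OF u0] by simp
  thus ?thesis using arctan_le_self[of "Im u / Re u"] assms by simp
qed

lemma Im_Ln_upper_left:
  assumes "Im u > 0" "Re u < 0" shows "pi - Im (Ln u) \<le> Im u / (- Re u)"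
proof -
  have u0: "u \<noteq> 0" using assms by auto
  have "Arg (-u) = Arg u - pi"
    using Arg_minus[OF u0] Im_Ln_pos_bounds[OF assms(1)] Arg_eq_Im_Ln[OF u0] by auto
  moreover have "Arg (-u) = arctan (Im (-u) / Re (-u))"
    using arg_conv_arctan[of "-u"] assms by simp
  ultimately have "pi - Im (Ln u) = arctan (Im u / (- Re u))"
    using Arg_eq_Im_Ln[OF u0] by (simp add: arctan_minus)
  moreover have "0 \<le> Im u / (- Re u)" using assms by (intro divide_nonneg_pos) auto
  ultimately show ?thesis using arctan_le_self by metis
qed

lemma sum_decomp_at:
  fixes c th :: "nat \<Rightarrow> real"
  assumes "m \<le> N"
  shows "(\<Sum>k\<le>N. c k * th k) = c m * th m + pi * (\<Sum>k\<in>{m<..N}. c k)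
     + (\<Sum>k\<le>N. c k * (if k < m then th k else if k = m then 0 else th k - pi))"
proof -
  have "(\<Sum>k\<le>N. c k * th k) = (\<Sum>k\<le>N. c k * (if k < m then th k else if k = m then 0 else th k - pi))
     + (\<Sum>k\<le>N. (if k = m then c k * th k else 0)) + (\<Sum>k\<le>N. (if m < k then pi * c k else 0))"
  proof -
    have pt: "c k * th k = c k * (if k < m then th k else if k = m then 0 else th k - pi)
       + (if k = m then c k * th k else 0) + (if m < k then pi * c k else 0)" for k
      by (auto simp: algebra_simps)
    show ?thesis by (subst sum.cong[OF refl pt]) (simp add: sum.distrib)
  qed
  also have "(\<Sum>k\<le>N. (if k = m then c k * th k else 0)) = c m * th m"
    using sum.delta[of "{..N}" m "\<lambda>k. c k * th k"] assms by simp
  also have "(\<Sum>k\<le>N. (if m < k then pi * c k else 0)) = (\<Sum>k\<in>{k\<in>{..N}. m < k}. pi * c k)"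
    using sum.inter_filter[of "{..N}" "\<lambda>k. pi * c k" "\<lambda>k. m < k"] by simp
  also have "{k\<in>{..N}. m < k} = {m<..N}" by auto
  finally show ?thesis by (simp add: sum_distrib_left)
qed

lemma im_sum_approx:
  fixes c p :: "nat \<Rightarrow> real" and z :: complex
  assumes d: "d > 0" and A: "A > 0" "(\<Sum>k\<le>N. \<bar>c k\<bar>) \<le> A"
    and m: "m \<le> N"
    and left: "\<And>k. k \<le> N \<Longrightarrow> k < m \<Longrightarrow> p k \<le> p m - d"
    and right: "\<And>k. k \<le> N \<Longrightarrow> m < k \<Longrightarrow> p m + d \<le> p k"
    and z: "Im z > 0" "norm (z - of_real (p m)) < \<delta>"
    and del: "\<delta> \<le> d/2"
  shows "\<exists>E. \<bar>E\<bar> \<le> A * (2 * Im z / d) \<and> (\<Sum>k\<le>N. c k * Im (Ln (z - of_real (p k))))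
     = c m * Im (Ln (z - of_real (p m))) + pi * (\<Sum>k\<in>{m<..N}. c k) + E"
proof -
  define th where "th k = Im (Ln (z - of_real (p k)))" for k
  define e where "e k = (if k < m then th k else if k = m then 0 else th k - pi)" for k
  define s where "s = (\<Sum>k\<in>{m<..N}. c k)"
  define y where "y = Im z"
  define g where "g = - c m"
  have y: "y > 0" using z y_def by simp
  have dec: "(\<Sum>k\<le>N. c k * th k) = - g * th m + pi * s + (\<Sum>k\<le>N. c k * e k)"
    using sum_decomp_at[OF m(1), of c th] by (simp add: e_def s_def g_def)
  have Rez: "\<bar>Re z - p m\<bar> < \<delta>"
    using z(2) abs_Re_le_cmod[of "z - of_real (p m)"] by simp
  have ebound: "\<bar>e k\<bar> \<le> 2*y/d" if k: "k \<le> N" for k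
  proof (cases "k < m")
    case True
    let ?u = "z - of_real (p k)"
    have Reu: "Re ?u \<ge> d/2" using left[OF k True] Rez del by simp
    have Imu: "Im ?u = y" by (simp add: y_def)
    have "th k \<le> y / Re ?u" using Im_Ln_upper_right[of ?u] Reu Imu y d by (simp add: th_def)
    also have "\<dots> \<le> y / (d/2)" using Reu y d by (intro divide_left_mono) auto
    also have "\<dots> = 2*y/d" by simp
    finally have "th k \<le> 2*y/d" .
    moreover have "0 < th k" using Im_Ln_pos_bounds(1)[of ?u] Imu y by (simp add: th_def)
    ultimately show ?thesis using True by (simp add: e_def)
  next
    case False
    show ?thesis
    proof (cases "k = m")
      case True then show ?thesis using y d by (simp add: e_def)
    next
      case False2: False
      hence km: "m < k" using False by simp
      let ?u = "z - of_real (p k)"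
      have Reu: "- Re ?u \<ge> d/2" using right[OF k km] Rez del by simp
      have Imu: "Im ?u = y" by (simp add: y_def)
      have "pi - th k \<le> y / (- Re ?u)" using Im_Ln_upper_left[of ?u] Reu Imu y d by (simp add: th_def)
      also have "\<dots> \<le> y / (d/2)" using Reu y d by (intro divide_left_mono) auto
      also have "\<dots> = 2*y/d" by simp
      finally have "pi - th k \<le> 2*y/d" .
      moreover have "th k < pi" using Im_Ln_pos_bounds(2)[of ?u] Imu y by (simp add: th_def)
      ultimately show ?thesis using False False2 by (simp add: e_def)
    qed
  qed
  have Ebound: "\<bar>\<Sum>k\<le>N. c k * e k\<bar> \<le> A * (2*y/d)"
  proof -
    have "\<bar>\<Sum>k\<le>N. c k * e k\<bar> \<le> (\<Sum>k\<le>N. \<bar>c k\<bar> * (2*y/d))"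
      by (rule order_trans[OF sum_abs], rule sum_mono) (auto simp: abs_mult intro!: mult_left_mono ebound simp del: times_divide_eq_right)
    also have "\<dots> = (\<Sum>k\<le>N. \<bar>c k\<bar>) * (2*y/d)" by (simp add: sum_distrib_right sum_divide_distrib)
    also have "\<dots> \<le> A * (2*y/d)" using A y d by (intro mult_right_mono) auto
    finally show ?thesis .
  qed
  show ?thesis using dec Ebound by (intro exI[of _ "\<Sum>k\<le>N. c k * e k"]) (simp add: th_def s_def g_def y_def)
qed

lemma local_nonexist:
  fixes c p :: "nat \<Rightarrow> real" and z :: complex
  assumes d: "d > 0" and A: "A > 0" "(\<Sum>k\<le>N. \<bar>c k\<bar>) \<le> A"
    and m: "m \<le> N" "c m < 0"
    and left: "\<And>k. k \<le> N \<Longrightarrow> k < m \<Longrightarrow> p k \<le> p m - d"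
    and right: "\<And>k. k \<le> N \<Longrightarrow> m < k \<Longrightarrow> p m + d \<le> p k"
    and z: "Im z > 0" "norm (z - of_real (p m)) < \<delta>"
    and del: "\<delta> \<le> d/2" "\<delta> \<le> (- c m) * d / (2*A)"
    and cond: "(\<Sum>k\<in>{m<..N}. c k) \<le> 0 \<or> (\<Sum>k\<in>{m<..N}. c k) \<ge> - c m"
  shows "(\<Sum>k\<le>N. c k * Im (Ln (z - of_real (p k)))) \<noteq> 0"
proof -
  define th where "th k = Im (Ln (z - of_real (p k)))" for k
  define e where "e k = (if k < m then th k else if k = m then 0 else th k - pi)" for k
  define s where "s = (\<Sum>k\<in>{m<..N}. c k)"
  define y where "y = Im z"
  define g where "g = - c m"
  have y: "y > 0" using z y_def by simp
  have g: "g > 0" using m g_def by simp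
  have dec: "(\<Sum>k\<le>N. c k * th k) = - g * th m + pi * s + (\<Sum>k\<le>N. c k * e k)"
    using sum_decomp_at[OF m(1), of c th] by (simp add: e_def s_def g_def)
  have Rez: "\<bar>Re z - p m\<bar> < \<delta>"
    using z(2) abs_Re_le_cmod[of "z - of_real (p m)"] by simp
  have ebound: "\<bar>e k\<bar> \<le> 2*y/d" if k: "k \<le> N" for k
  proof (cases "k < m")
    case True
    let ?u = "z - of_real (p k)"
    have Reu: "Re ?u \<ge> d/2" using left[OF k True] Rez del by simp
    have Imu: "Im ?u = y" by (simp add: y_def)
    have "th k \<le> y / Re ?u" using Im_Ln_upper_right[of ?u] Reu Imu y d by (simp add: th_def)
    also have "\<dots> \<le> y / (d/2)" using Reu y d by (intro divide_left_mono) auto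
    also have "\<dots> = 2*y/d" by simp
    finally have "th k \<le> 2*y/d" .
    moreover have "0 < th k" using Im_Ln_pos_bounds(1)[of ?u] Imu y by (simp add: th_def)
    ultimately show ?thesis using True by (simp add: e_def)
  next
    case False
    show ?thesis
    proof (cases "k = m")
      case True then show ?thesis using y d by (simp add: e_def)
    next
      case False2: False
      hence km: "m < k" using False by simp
      let ?u = "z - of_real (p k)"
      have Reu: "- Re ?u \<ge> d/2" using right[OF k km] Rez del by simp
      have Imu: "Im ?u = y" by (simp add: y_def)
      have "pi - th k \<le> y / (- Re ?u)" using Im_Ln_upper_left[of ?u] Reu Imu y d by (simp add: th_def)
      also have "\<dots> \<le> y / (d/2)" using Reu y d by (intro divide_left_mono) auto
      also have "\<dots> = 2*y/d" by simp
      finally have "pi - th k \<le> 2*y/d" .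
      moreover have "th k < pi" using Im_Ln_pos_bounds(2)[of ?u] Imu y by (simp add: th_def)
      ultimately show ?thesis using False False2 by (simp add: e_def)
    qed
  qed
  have Ebound: "\<bar>\<Sum>k\<le>N. c k * e k\<bar> \<le> A * (2*y/d)"
  proof -
    have "\<bar>\<Sum>k\<le>N. c k * e k\<bar> \<le> (\<Sum>k\<le>N. \<bar>c k\<bar> * (2*y/d))"
      by (rule order_trans[OF sum_abs], rule sum_mono) (auto simp: abs_mult intro!: mult_left_mono ebound simp del: times_divide_eq_right)
    also have "\<dots> = (\<Sum>k\<le>N. \<bar>c k\<bar>) * (2*y/d)" by (simp add: sum_distrib_right sum_divide_distrib)
    also have "\<dots> \<le> A * (2*y/d)" using A y d by (intro mult_right_mono) auto
    finally show ?thesis .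
  qed
  let ?u = "z - of_real (p m)"
  have Imu: "Im ?u = y" by (simp add: y_def)
  have nu: "norm ?u > 0" using y Imu by (auto simp: y_def)
  have low1: "y / norm ?u \<le> th m" and low2: "y / norm ?u \<le> pi - th m"
    using Im_Ln_lower[of ?u] Imu y by (auto simp: th_def)
  have dpos: "\<delta> > 0" using nu z(2) by linarith
  have "y / \<delta> < y / norm ?u" using z(2) nu y dpos by (intro divide_strict_left_mono) auto
  have gd: "2*A/d \<le> g / \<delta>"
  proof -
    have dpos: "\<delta> > 0" using nu z(2) by linarith
    have "\<delta> * (2*A) \<le> g * d" using del(2) A d by (simp add: g_def field_simps)
    thus ?thesis using dpos d by (simp add: field_simps)
  qed
  have key: "A * (2*y/d) < g * (y / norm ?u)"
  proof -
    have "A * (2*y/d) = (2*A/d) * y" by simp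
    also have "\<dots> \<le> (g/\<delta>) * y" using gd y by (intro mult_right_mono) auto
    also have "\<dots> = g * (y/\<delta>)" by simp
    also have "\<dots> < g * (y / norm ?u)" using \<open>y / \<delta> < y / norm ?u\<close> g by (rule mult_strict_left_mono)
    finally show ?thesis .
  qed
  have "(\<Sum>k\<le>N. c k * th k) \<noteq> 0"
  proof (cases "s \<le> 0")
    case True
    have "g * (y / norm ?u) \<le> g * th m" using low1 g by (intro mult_left_mono) auto
    moreover have "pi * s \<le> 0" using True pi_gt_zero by (simp add: mult_nonneg_nonpos)
    moreover have "(\<Sum>k\<le>N. c k * e k) \<le> A * (2*y/d)" using Ebound by (rule abs_le_D1)
    ultimately have "(\<Sum>k\<le>N. c k * th k) < 0" using dec key by linarith
    thus ?thesis by simp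
  next
    case False
    hence sg: "s \<ge> g" using cond by (simp add: s_def g_def)
    have "g * (y / norm ?u) \<le> g * (pi - th m)" using low2 g by (intro mult_left_mono) auto
    moreover have "g * (pi - th m) = pi * g - g * th m" by (simp add: algebra_simps)
    moreover have "pi * g \<le> pi * s" using sg by (intro mult_left_mono) auto
    moreover have "- (\<Sum>k\<le>N. c k * e k) \<le> A * (2*y/d)" using Ebound by (rule abs_le_D2)
    moreover have "(\<Sum>k\<le>N. c k * th k) = pi * s + (\<Sum>k\<le>N. c k * e k) - g * th m" using dec by simp
    ultimately have "(\<Sum>k\<le>N. c k * th k) > 0" using key by linarith
    thus ?thesis by simp
  qed
  thus ?thesis by (simp add: th_def)
qed

lemma ln_term_bound:
  fixes a b c D :: real
  assumes a: "a > 0" "a \<le> b" "b \<le> a + D" "D \<ge> 0" and del: "c < 0 \<Longrightarrow> a \<ge> \<delta>" "\<delta> > 0"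
  shows "c * (ln a - ln b) \<le> \<bar>c\<bar> * ln (1 + D/\<delta>)"
proof (cases "c < 0")
  case True
  have b: "b > 0" using a by simp
  have "b / a \<le> 1 + D/a" using a by (simp add: field_simps)
  also have "\<dots> \<le> 1 + D/\<delta>" using a del True by (intro add_left_mono divide_left_mono) auto
  finally have "ln (b/a) \<le> ln (1 + D/\<delta>)" using a b by (intro ln_mono) auto
  hence "ln b - ln a \<le> ln (1 + D/\<delta>)" using a b by (simp add: ln_div)
  hence "(-c) * (ln b - ln a) \<le> (-c) * ln (1 + D/\<delta>)" using True by (intro mult_left_mono) auto
  thus ?thesis using True by (simp add: algebra_simps)
next
  case False
  have "ln a - ln b \<le> 0" using a by simp
  hence "c * (ln a - ln b) \<le> 0" using False by (simp add: mult_nonneg_nonpos)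
  moreover have "0 \<le> ln (1 + D/\<delta>)" using a del by simp
  moreover have "0 \<le> \<bar>c\<bar> * ln (1 + D/\<delta>)" using calculation(2) by (intro mult_nonneg_nonneg) auto
  ultimately show ?thesis by linarith
qed

lemma re_bound:
  fixes c p :: "nat \<Rightarrow> real" and z :: complex
  assumes sc: "(\<Sum>k\<le>N. c k) = 0" and P: "P > 0" "\<And>k. k \<le> N \<Longrightarrow> \<bar>p k\<bar> \<le> P"
    and del: "\<delta> > 0" "\<And>k. k \<le> N \<Longrightarrow> c k < 0 \<Longrightarrow> norm (z - of_real (p k)) \<ge> \<delta>"
    and z: "Im z \<noteq> 0"
  shows "(\<Sum>k\<le>N. c k * ln (norm (z - of_real (p k)))) \<le> (\<Sum>k\<le>N. \<bar>c k\<bar>) * ln (1 + 2*P/\<delta>)"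
proof -
  define b where "b = norm z + P"
  have "(\<Sum>k\<le>N. c k * ln (norm (z - of_real (p k)))) = (\<Sum>k\<le>N. c k * (ln (norm (z - of_real (p k))) - ln b))"
  proof -
    have "(\<Sum>k\<le>N. c k * ln b) = 0" using sc by (simp add: sum_distrib_right[symmetric])
    thus ?thesis by (simp add: right_diff_distrib sum_subtractf)
  qed
  also have "\<dots> \<le> (\<Sum>k\<le>N. \<bar>c k\<bar> * ln (1 + 2*P/\<delta>))"
  proof (rule sum_mono)
    fix k assume k: "k \<in> {..N}"
    let ?a = "norm (z - of_real (p k))"
    have a0: "?a > 0" using z by auto
    have "?a \<le> norm z + norm (of_real (p k) :: complex)" by (rule norm_triangle_ineq4)
    hence ab: "?a \<le> b" using P(2)[of k] k by (simp add: b_def)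
    have "norm z \<le> ?a + norm (of_real (p k) :: complex)" using norm_triangle_sub[of z "of_real (p k)"] by simp
    hence ba: "b \<le> ?a + 2*P" using P(2)[of k] k by (simp add: b_def)
    show "c k * (ln ?a - ln b) \<le> \<bar>c k\<bar> * ln (1 + 2*P/\<delta>)"
      using ln_term_bound[of ?a b "2*P" "c k" \<delta>] a0 ab ba P del k by auto
  qed
  also have "\<dots> = (\<Sum>k\<le>N. \<bar>c k\<bar>) * ln (1 + 2*P/\<delta>)" by (simp add: sum_distrib_right)
  finally show ?thesis .
qed

lemma abs_ln_le: fixes x :: real assumes "x > 0" shows "\<bar>ln x\<bar> \<le> x + 1/x"
proof -
  have "ln x \<le> x - 1" using ln_le_minus_one[OF assms] .
  moreover have "ln (1/x) \<le> 1/x - 1" using ln_le_minus_one[of "1/x"] assms by simp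
  hence "- ln x \<le> 1/x - 1" using assms by (simp add: ln_div)
  moreover have "1/x > 0" using assms by simp
  ultimately show ?thesis using assms by linarith
qed

lemma h_deriv:
  fixes c p :: "nat \<Rightarrow> real"
  assumes "Im z > 0"
  shows "((\<lambda>z. \<Sum>k\<le>N. if k = j then 0 else of_real (c k) * Ln (z - of_real (p k))) has_field_derivative
     (\<Sum>k\<le>N. if k = j then 0 else of_real (c k) / (z - of_real (p k)))) (at z)"
proof (rule DERIV_sum)
  fix k assume "k \<in> {..N}"
  show "((\<lambda>z. if k = j then 0 else of_real (c k) * Ln (z - of_real (p k))) has_field_derivative
     (if k = j then 0 else of_real (c k) / (z - of_real (p k)))) (at z)"
  proof (cases "k = j")
    case True then show ?thesis by simp
  next
    case False
    have nz: "z - of_real (p k) \<notin> \<real>\<^sub>\<le>\<^sub>0" using assms by (auto simp: complex_nonpos_Reals_iff)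
    have "((\<lambda>z. of_real (c k) * Ln (z - of_real (p k))) has_field_derivative
         of_real (c k) * (inverse (z - of_real (p k)) * 1)) (at z)"
    proof -
      have d1: "((\<lambda>x. x - of_real (p k)) has_field_derivative 1) (at z)" by (auto intro!: derivative_eq_intros)
      have "((\<lambda>x. Ln (x - of_real (p k))) has_field_derivative inverse (z - of_real (p k)) * 1) (at z)"
        by (rule DERIV_chain2[where g="\<lambda>x. x - of_real (p k)", OF has_field_derivative_Ln[OF nz] d1])
      thus ?thesis by (rule DERIV_cmult)
    qed
    thus ?thesis using False by (simp add: field_simps)
  qed
qed

lemma local_exist_unique:
  fixes c p :: "nat \<Rightarrow> real"
  assumes d: "d > 0" and A: "A > 0" "(\<Sum>k\<le>N. \<bar>c k\<bar>) \<le> A"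
    and P: "P > 0" "\<And>k. k \<le> N \<Longrightarrow> \<bar>p k\<bar> \<le> P"
    and j: "j \<le> N" "c j = -1"
    and left: "\<And>k. k \<le> N \<Longrightarrow> k < j \<Longrightarrow> p k \<le> p j - d"
    and right: "\<And>k. k \<le> N \<Longrightarrow> j < k \<Longrightarrow> p j + d \<le> p k"
    and s: "0 < (\<Sum>k\<in>{j<..N}. c k)" "(\<Sum>k\<in>{j<..N}. c k) < 1"
  shows "\<exists>\<rho>>0. \<exists>Y0. \<forall>Y\<ge>Y0. \<exists>!z. Im z > 0 \<and> norm (z - of_real (p j)) < \<rho> \<and>
            (\<Sum>k\<le>N. of_real (c k) * Ln (z - of_real (p k))) = of_real Y"
proof -
  define s where "s = (\<Sum>k\<in>{j<..N}. c k)"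
  define \<epsilon> where "\<epsilon> = pi * min s (1 - s) / 2"
  define \<rho> where "\<rho> = min (min (d/4) 1) (\<epsilon> * d / (2*A))"
  define h where "h z = (\<Sum>k\<le>N. if k = j then 0 else of_real (c k) * Ln (z - of_real (p k)))" for z
  define h' :: "complex \<Rightarrow> complex" where "h' z = (\<Sum>k\<le>N. if k = j then 0 else of_real (c k) / (z - of_real (p k)))" for z
  define G where "G z = (\<Sum>k\<le>N. of_real (c k) * Ln (z - of_real (p k)))" for z
  define H0 where "H0 = A * (1 + 2*P + 2/d)"
  have s01: "0 < s" "s < 1" using s by (auto simp: s_def)
  have eps: "\<epsilon> > 0" using s01 by (simp add: \<epsilon>_def)
  have eps2: "2 * \<epsilon> \<le> pi * s" "2 * \<epsilon> \<le> pi * (1 - s)"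
    by (auto simp: \<epsilon>_def min_def)
  have eps1: "\<epsilon> < 1"
  proof -
    have "min s (1-s) \<le> 1/2" by (simp add: min_def)
    hence "pi * min s (1-s) \<le> pi * (1/2)" using pi_gt_zero by (intro mult_left_mono) auto
    hence "\<epsilon> \<le> pi / 4" unfolding \<epsilon>_def by simp
    thus ?thesis using pi_less_4 by simp
  qed
  have rho: "\<rho> > 0" "\<rho> \<le> d/4" "\<rho> \<le> 1" "\<rho> \<le> \<epsilon> * d / (2*A)"
    using d A eps by (auto simp: \<rho>_def)
  have rhoA: "A * (2 * \<rho> / d) \<le> \<epsilon>"
  proof -
    have "\<rho> * (2*A) \<le> \<epsilon> * d" using rho(4) A d by (simp add: field_simps)
    thus ?thesis using d by (simp add: field_simps)
  qed
  have GH: "G z = h z - Ln (z - of_real (p j))" for z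
  proof -
    have pt: "of_real (c k) * Ln (z - of_real (p k)) = (if k = j then 0 else of_real (c k) * Ln (z - of_real (p k)))
        + (if k = j then of_real (c k) * Ln (z - of_real (p k)) else 0)" for k by simp
    have "G z = h z + (\<Sum>k\<le>N. if k = j then of_real (c k) * Ln (z - of_real (p k)) else 0)"
      unfolding G_def h_def by (subst sum.cong[OF refl pt]) (simp add: sum.distrib)
    also have "(\<Sum>k\<le>N. if k = j then of_real (c k) * Ln (z - of_real (p k)) else 0) = - Ln (z - of_real (p j))"
      using sum.delta[of "{..N}" j "\<lambda>k. of_real (c k) * Ln (z - of_real (p k))"] j by simp
    finally show ?thesis by simp
  qed
  have F1: "\<epsilon> \<le> Im (h z) \<and> Im (h z) \<le> pi - \<epsilon>" if z: "Im z > 0" "norm (z - of_real (p j)) \<le> \<rho>" for z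
  proof -
    have zl: "norm (z - of_real (p j)) < d/2" using z rho d by simp
    obtain E where E: "\<bar>E\<bar> \<le> A * (2 * Im z / d)"
      "(\<Sum>k\<le>N. c k * Im (Ln (z - of_real (p k)))) = c j * Im (Ln (z - of_real (p j))) + pi * s + E"
      using im_sum_approx[where d=d and A=A and N=N and c=c and m=j and p=p and z=z and \<delta>="d/2",
          OF d A j(1) left right z(1) zl order_refl] by (auto simp: s_def)
    have "Im (G z) = (\<Sum>k\<le>N. c k * Im (Ln (z - of_real (p k))))" by (simp add: G_def Im_sum)
    hence "Im (h z) = pi * s + E" using GH[of z] E j by simp
    moreover have "Im z \<le> \<rho>" using z abs_Im_le_cmod[of "z - of_real (p j)"] by simp
    hence "A * (2 * Im z / d) \<le> A * (2 * \<rho> / d)" using A d by (intro mult_left_mono divide_right_mono) auto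
    hence "\<bar>E\<bar> \<le> \<epsilon>" using E rhoA by simp
    ultimately show ?thesis using eps2 by (auto simp: algebra_simps) 
  qed
  have F2: "Re (h z) \<le> H0" if z: "Im z > 0" "norm (z - of_real (p j)) \<le> \<rho>" for z
  proof -
    have "Re (h z) = (\<Sum>k\<le>N. if k = j then 0 else c k * ln (norm (z - of_real (p k))))"
    proof -
      have nz: "z - of_real (p k) \<noteq> 0" for k using z by auto
      show ?thesis unfolding h_def Re_sum by (intro sum.cong refl) (use nz in \<open>auto\<close>)
    qed
    also have "\<dots> \<le> (\<Sum>k\<le>N. \<bar>c k\<bar> * (1 + 2*P + 2/d))"
    proof (rule sum_mono)
      fix k assume k: "k \<in> {..N}"
      show "(if k = j then 0 else c k * ln (norm (z - of_real (p k)))) \<le> \<bar>c k\<bar> * (1 + 2*P + 2/d)"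
      proof (cases "k = j")
        case True then show ?thesis using P d by simp
      next
        case False
        let ?a = "norm (z - of_real (p k))"
        have "norm (of_real (p j) - of_real (p k) :: complex) \<ge> d"
          using left[of k] right[of k] k False by (cases "k < j") (auto simp: norm_of_real simp flip: of_real_diff)
        moreover have "norm (of_real (p j) - of_real (p k) :: complex) \<le> ?a + norm (z - of_real (p j))"
          using norm_triangle_ineq4[of "z - of_real (p k)" "z - of_real (p j)"] by (simp add: norm_minus_commute)
        ultimately have a1: "?a \<ge> d/2" using z rho by simp
        have "?a \<le> norm (z - of_real (p j)) + norm (of_real (p j) - of_real (p k) :: complex)"
          using norm_triangle_ineq[of "z - of_real (p j)" "of_real (p j) - of_real (p k)"] by simp
        also have "norm (of_real (p j) - of_real (p k) :: complex) \<le> 2*P"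
          using P(2)[of j] P(2)[of k] k j by (simp add: norm_of_real flip: of_real_diff)
        finally have a2: "?a \<le> 1 + 2*P" using z rho by simp
        have apos: "?a > 0" using a1 d by linarith
        have "1/?a \<le> 2/d" using a1 d apos by (simp add: field_simps)
        hence "\<bar>ln ?a\<bar> \<le> 1 + 2*P + 2/d" using abs_ln_le[OF apos] a2 by simp
        have "c k * ln ?a \<le> \<bar>c k * ln ?a\<bar>" by simp
        also have "\<dots> = \<bar>c k\<bar> * \<bar>ln ?a\<bar>" by (simp add: abs_mult)
        also have "\<dots> \<le> \<bar>c k\<bar> * (1 + 2*P + 2/d)" using \<open>\<bar>ln ?a\<bar> \<le> 1 + 2*P + 2/d\<close> by (intro mult_left_mono) auto
        finally have "c k * ln ?a \<le> \<bar>c k\<bar> * (1 + 2*P + 2/d)" .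
        thus ?thesis using False by simp
      qed
    qed
    also have "\<dots> = (\<Sum>k\<le>N. \<bar>c k\<bar>) * (1 + 2*P + 2/d)" by (simp add: sum_distrib_right)
    also have "\<dots> \<le> H0" unfolding H0_def using A P d by (intro mult_right_mono) auto
    finally show ?thesis .
  qed
  have F3: "(h has_field_derivative h' z) (at z) \<and> norm (h' z) \<le> A * (2/d)"
    if z: "Im z > 0" "norm (z - of_real (p j)) \<le> \<rho>" for z
  proof
    show "(h has_field_derivative h' z) (at z)" unfolding h_def h'_def using h_deriv[OF z(1)] by simp
    have "norm (h' z) \<le> (\<Sum>k\<le>N. norm (if k = j then 0 else of_real (c k) / (z - of_real (p k))))"
      unfolding h'_def by (rule norm_sum)
    also have "\<dots> \<le> (\<Sum>k\<le>N. \<bar>c k\<bar> * (2/d))"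
    proof (rule sum_mono)
      fix k assume k: "k \<in> {..N}"
      show "norm (if k = j then 0 else of_real (c k) / (z - of_real (p k))) \<le> \<bar>c k\<bar> * (2/d)"
      proof (cases "k = j")
        case True then show ?thesis using d by simp
      next
        case False
        let ?a = "norm (z - of_real (p k))"
        have "norm (of_real (p j) - of_real (p k) :: complex) \<ge> d"
          using left[of k] right[of k] k False by (cases "k < j") (auto simp: norm_of_real simp flip: of_real_diff)
        moreover have "norm (of_real (p j) - of_real (p k) :: complex) \<le> ?a + norm (z - of_real (p j))"
          using norm_triangle_ineq4[of "z - of_real (p k)" "z - of_real (p j)"] by (simp add: norm_minus_commute)
        ultimately have a1: "?a \<ge> d/2" using z rho by simp
        have apos: "?a > 0" using a1 d by linarith
        have "norm (of_real (c k) / (z - of_real (p k))) = \<bar>c k\<bar> / ?a" by (simp add: norm_divide)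
        also have "\<dots> \<le> \<bar>c k\<bar> / (d/2)" using a1 d apos by (intro divide_left_mono) (auto intro: mult_pos_pos)
        finally show ?thesis using False by simp
      qed
    qed
    also have "\<dots> = (\<Sum>k\<le>N. \<bar>c k\<bar>) * (2/d)" by (simp add: sum_distrib_right sum_divide_distrib)
    also have "\<dots> \<le> A * (2/d)" using A d by (intro mult_right_mono) auto
    finally show "norm (h' z) \<le> A * (2/d)" .
  qed
  show ?thesis
  proof (rule exI[of _ \<rho>], rule conjI[OF rho(1)], rule exI[of _ "H0 - ln (\<rho>/2)"], intro allI impI)
    fix Y :: real assume Y: "H0 - ln (\<rho>/2) \<le> Y"
    define T where "T w = h (of_real (p j) + exp w) - of_real Y" for w
    define D where "D = {w. Re w \<le> ln \<rho>} \<inter> {w. Im w \<ge> \<epsilon>} \<inter> {w. Im w \<le> pi - \<epsilon>}"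
    have inD: "w \<in> D \<longleftrightarrow> Re w \<le> ln \<rho> \<and> \<epsilon> \<le> Im w \<and> Im w \<le> pi - \<epsilon>" for w by (auto simp: D_def)
    have Dz: "Im (of_real (p j) + exp w) > 0 \<and> norm ((of_real (p j) + exp w) - of_real (p j)) \<le> \<rho>"
      if w: "w \<in> D" for w
    proof
      have "0 < Im w" "Im w < pi" using w eps by (auto simp: inD)
      hence "sin (Im w) > 0" by (intro sin_gt_zero) 
      thus "Im (of_real (p j) + exp w) > 0" by (simp add: Im_exp)
      have "exp (Re w) \<le> exp (ln \<rho>)" using w by (auto simp: inD)
      thus "norm ((of_real (p j) + exp w) - of_real (p j)) \<le> \<rho>" using rho by (simp add: norm_exp_eq_Re)
    qed
    have TD: "T w \<in> D" if "w \<in> D" for w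
    proof -
      have z: "Im (of_real (p j) + exp w) > 0" "norm ((of_real (p j) + exp w) - of_real (p j)) \<le> \<rho>"
        using Dz[OF that] by auto
      have "Re (T w) \<le> ln (\<rho>/2)" using F2[OF z] Y by (simp add: T_def)
      also have "\<dots> \<le> ln \<rho>" using rho by simp
      finally show ?thesis using F1[OF z] by (simp add: inD T_def)
    qed
    have Tder: "(T has_field_derivative (h' (of_real (p j) + exp w) * exp w)) (at w)" if "w \<in> D" for w
    proof -
      have z: "Im (of_real (p j) + exp w) > 0" "norm ((of_real (p j) + exp w) - of_real (p j)) \<le> \<rho>"
        using Dz[OF that] by auto
      have "((\<lambda>w. h (of_real (p j) + exp w)) has_field_derivative h' (of_real (p j) + exp w) * (0 + exp w)) (at w)"
        by (rule DERIV_chain2[where g="\<lambda>w. of_real (p j) + exp w", OF conjunct1[OF F3[OF z]]]) (auto intro!: derivative_eq_intros)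
      thus ?thesis unfolding T_def by (auto intro!: derivative_eq_intros)
    qed
    have Tlip: "dist (T x) (T y) \<le> \<epsilon> * dist x y" if "x \<in> D" "y \<in> D" for x y
    proof -
      have "norm (T x - T y) \<le> \<epsilon> * norm (x - y)"
      proof (rule field_differentiable_bound[of D])
        show "convex D" unfolding D_def
          by (intro convex_Int convex_halfspace_Re_le convex_halfspace_Im_ge convex_halfspace_Im_le)
        show "(T has_field_derivative (h' (of_real (p j) + exp w) * exp w)) (at w within D)" if "w \<in> D" for w
          using Tder[OF that] by (rule has_field_derivative_at_within)
        show "norm (h' (of_real (p j) + exp w) * exp w) \<le> \<epsilon>" if "w \<in> D" for w
        proof -
          have z: "Im (of_real (p j) + exp w) > 0" "norm ((of_real (p j) + exp w) - of_real (p j)) \<le> \<rho>"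
            using Dz[OF that] by auto
          have "norm (h' (of_real (p j) + exp w) * exp w) \<le> A * (2/d) * \<rho>"
            unfolding norm_mult using conjunct2[OF F3[OF z]] z(2) A d
            by (intro mult_mono) auto
          also have "\<dots> = A * (2 * \<rho> / d)" by simp
          finally show ?thesis using rhoA by simp
        qed
      qed (use that in auto)
      thus ?thesis by (simp add: dist_norm)
    qed
    have Dne: "D \<noteq> {}"
    proof -
      have "Complex (ln \<rho>) (pi/2) \<in> D" using eps1 eps2 s01 pi_gt3 by (auto simp: inD)
      thus ?thesis by blast
    qed
    have Dcl: "complete D"
      unfolding complete_eq_closed D_def
      by (intro closed_Int closed_halfspace_Re_le closed_halfspace_Im_ge closed_halfspace_Im_le)
    have TDs: "T ` D \<subseteq> D" using TD by blast
    have "\<exists>!x\<in>D. T x = x"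
      by (rule Banach_fix[OF Dcl Dne _ eps1 TDs Tlip]) (use eps in auto)
    then obtain w0 where w0: "w0 \<in> D" "T w0 = w0" and w0u: "\<And>w. w \<in> D \<Longrightarrow> T w = w \<Longrightarrow> w = w0"
      by blast
    define z0 where "z0 = of_real (p j) + exp w0"
    have lnz0: "Ln (z0 - of_real (p j)) = w0"
    proof -
      have "-pi < Im w0" "Im w0 \<le> pi" using w0 eps by (auto simp: inD)
      thus ?thesis by (simp add: z0_def)
    qed
    have "\<exists>!z. Im z > 0 \<and> norm (z - of_real (p j)) < \<rho> \<and> G z = of_real Y"
    proof (rule ex1I[of _ z0])
      have z0p: "Im z0 > 0" "norm (z0 - of_real (p j)) \<le> \<rho>" using Dz[OF w0(1)] by (auto simp: z0_def)
      have "Re (T w0) = Re (h z0) - Y" by (simp add: T_def z0_def)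
      hence "Re w0 \<le> ln (\<rho>/2)" using w0(2) F2[OF z0p] Y by simp
      hence "exp (Re w0) \<le> exp (ln (\<rho>/2))" by simp
      hence "exp (Re w0) \<le> \<rho>/2" using rho by simp
      hence "norm (z0 - of_real (p j)) < \<rho>" using rho by (simp add: z0_def norm_exp_eq_Re)
      moreover have "G z0 = of_real Y"
      proof -
        have "h z0 - of_real Y = w0" using w0(2) by (simp add: T_def z0_def)
        hence e: "h z0 = w0 + of_real Y" by (metis diff_add_cancel)
        show ?thesis using GH[of z0] lnz0 e by simp
      qed
      ultimately show "Im z0 > 0 \<and> norm (z0 - of_real (p j)) < \<rho> \<and> G z0 = of_real Y" using z0p by simp
    next
      fix z1 assume z1: "Im z1 > 0 \<and> norm (z1 - of_real (p j)) < \<rho> \<and> G z1 = of_real Y"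
      define w1 where "w1 = Ln (z1 - of_real (p j))"
      have nz: "z1 - of_real (p j) \<noteq> 0" using z1 by auto
      have ew: "exp w1 = z1 - of_real (p j)" using nz by (simp add: w1_def)
      have "Re w1 = ln (norm (z1 - of_real (p j)))" using nz by (simp add: w1_def)
      moreover have "ln (norm (z1 - of_real (p j))) \<le> ln \<rho>" using z1 nz rho by (intro ln_mono) auto
      ultimately have "Re w1 \<le> ln \<rho>" by simp
      have Tw1: "T w1 = w1" using z1 GH[of z1] ew by (simp add: T_def w1_def algebra_simps)
      have "\<epsilon> \<le> Im (h z1) \<and> Im (h z1) \<le> pi - \<epsilon>" using F1[of z1] z1 by simp
      moreover have "Im w1 = Im (h z1)"
      proof -
        have "Im w1 = Im (T w1)" using Tw1 by simp
        also have "\<dots> = Im (h z1)" using ew by (simp add: T_def)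
        finally show ?thesis .
      qed
      ultimately have "w1 \<in> D" using \<open>Re w1 \<le> ln \<rho>\<close> by (simp add: inD)
      hence "w1 = w0" using w0u Tw1 by simp
      thus "z1 = z0" using ew by (simp add: z0_def)
    qed
    thus "\<exists>!z. Im z > 0 \<and> norm (z - of_real (p j)) < \<rho> \<and>
            (\<Sum>k\<le>N. of_real (c k) * Ln (z - of_real (p k))) = of_real Y" by (simp add: G_def)
  qed
qed

lemma ReG: fixes c p :: "nat \<Rightarrow> real" assumes "Im z \<noteq> 0"
  shows "Re (\<Sum>k\<le>N. of_real (c k) * Ln (z - of_real (p k))) = (\<Sum>k\<le>N. c k * ln (norm (z - of_real (p k))))"
proof -
  have nz: "z - of_real (p k) \<noteq> 0" for k using assms by auto
  show ?thesis unfolding Re_sum by (intro sum.cong refl) (simp add: Re_Ln[OF nz])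
qed

lemma ImG: fixes c p :: "nat \<Rightarrow> real"
  shows "Im (\<Sum>k\<le>N. of_real (c k) * Ln (z - of_real (p k))) = (\<Sum>k\<le>N. c k * Im (Ln (z - of_real (p k))))"
  unfolding Im_sum by simp

lemma gap_lemma:
  fixes p :: "nat \<Rightarrow> real"
  assumes mono: "\<And>k. k < N \<Longrightarrow> p k < p (Suc k)" and d: "\<And>k. k < N \<Longrightarrow> d \<le> p (Suc k) - p k"
  shows "k < m \<Longrightarrow> m \<le> N \<Longrightarrow> p k + d \<le> p m"
proof (induction m)
  case 0 then show ?case by simp
next
  case (Suc m)
  show ?case
  proof (cases "k = m")
    case True then show ?thesis using d[of m] Suc by simp
  next
    case False
    hence "p k + d \<le> p m" using Suc by simp
    also have "p m < p (Suc m)" using mono[of m] Suc by simp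
    finally show ?thesis by simp
  qed
qed

theorem abstract_count:
  fixes c p :: "nat \<Rightarrow> real"
  assumes mono: "\<And>k. k < N \<Longrightarrow> p k < p (Suc k)"
    and sc: "(\<Sum>k\<le>N. c k) = 0"
    and j: "j \<le> N" "c j = -1"
    and s01: "0 \<le> (\<Sum>k\<in>{j<..N}. c k)" "(\<Sum>k\<in>{j<..N}. c k) \<le> 1"
    and cond: "\<And>m. m \<le> N \<Longrightarrow> m \<noteq> j \<Longrightarrow> c m < 0 \<Longrightarrow>
        (\<Sum>k\<in>{m<..N}. c k) \<le> 0 \<or> (\<Sum>k\<in>{m<..N}. c k) \<ge> - c m"
  shows "\<exists>Y0. \<forall>Y\<ge>Y0. (if (\<Sum>k\<in>{j<..N}. c k) = 0 \<or> (\<Sum>k\<in>{j<..N}. c k) = 1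
      then (\<forall>z. Im z > 0 \<longrightarrow> (\<Sum>k\<le>N. of_real (c k) * Ln (z - of_real (p k))) \<noteq> of_real Y)
      else (\<exists>!z. Im z > 0 \<and> (\<Sum>k\<le>N. of_real (c k) * Ln (z - of_real (p k))) = of_real Y))"
proof -
  define s where "s = (\<Sum>k\<in>{j<..N}. c k)"
  define G where "G z = (\<Sum>k\<le>N. of_real (c k) * Ln (z - of_real (p k)))" for z
  have N0: "N > 0"
  proof (rule ccontr)
    assume "\<not> N > 0" hence "N = 0" by simp
    thus False using sc j by simp
  qed
  define d where "d = Min ((\<lambda>k. p (Suc k) - p k) ` {..<N})"
  have dpos: "d > 0" unfolding d_def using N0 mono by (subst Min_gr_iff) auto
  have dle: "d \<le> p (Suc k) - p k" if "k < N" for k unfolding d_def using that by (intro Min_le) auto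
  have left: "p k \<le> p m - d" if "k \<le> N" "k < m" "m \<le> N" for k m
    using gap_lemma[where p=p and N=N and d=d, OF mono dle, of k m] that by simp
  have right: "p m + d \<le> p k" if "k \<le> N" "m < k" for k m
    using gap_lemma[where p=p and N=N and d=d, OF mono dle, of m k] that by simp
  define A where "A = 1 + (\<Sum>k\<le>N. \<bar>c k\<bar>)"
  have A0: "0 \<le> (\<Sum>k\<le>N. \<bar>c k\<bar>)" by (intro sum_nonneg) auto
  have A: "A > 0" "(\<Sum>k\<le>N. \<bar>c k\<bar>) \<le> A" unfolding A_def using A0 by linarith+
  define P where "P = 1 + (\<Sum>k\<le>N. \<bar>p k\<bar>)"
  have P: "P > 0" "\<And>k. k \<le> N \<Longrightarrow> \<bar>p k\<bar> \<le> P"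
  proof -
    have "0 \<le> (\<Sum>k\<le>N. \<bar>p k\<bar>)" by (intro sum_nonneg) auto
    thus "P > 0" unfolding P_def by linarith
    fix k assume "k \<le> N"
    hence "\<bar>p k\<bar> \<le> (\<Sum>k\<le>N. \<bar>p k\<bar>)" by (intro member_le_sum) auto
    thus "\<bar>p k\<bar> \<le> P" unfolding P_def by simp
  qed
  define NS where "NS = {m \<in> {..N}. c m < 0}"
  define g0 where "g0 = Min ((\<lambda>m. - c m) ` NS)"
  have NSf: "finite NS" "j \<in> NS" using j by (auto simp: NS_def)
  have g0pos: "g0 > 0" unfolding g0_def using NSf by (subst Min_gr_iff) (auto simp: NS_def)
  have g0le: "g0 \<le> - c m" if "m \<le> N" "c m < 0" for m
    unfolding g0_def using NSf that by (intro Min_le) (auto simp: NS_def)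
  define \<delta>0 where "\<delta>0 = min (d/2) (g0 * d / (2*A))"
  have d0: "\<delta>0 > 0" "\<delta>0 \<le> d/2" using dpos g0pos A by (auto simp: \<delta>0_def)
  have d0c: "\<delta>0 \<le> (- c m) * d / (2*A)" if "m \<le> N" "c m < 0" for m
  proof -
    have "g0 * d / (2*A) \<le> (- c m) * d / (2*A)"
      using g0le[OF that] dpos A by (intro divide_right_mono mult_right_mono) auto
    thus ?thesis by (simp add: \<delta>0_def)
  qed
  have confine: "\<exists>k\<le>N. c k < 0 \<and> norm (z - of_real (p k)) < \<delta>"
    if z: "Im z > 0" "G z = of_real Y" and del: "\<delta> > 0" and Y: "Y > A * ln (1 + 2*P/\<delta>)" for z Y \<delta>
  proof (rule ccontr)
    assume "\<not> ?thesis"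
    hence far: "\<And>k. k \<le> N \<Longrightarrow> c k < 0 \<Longrightarrow> norm (z - of_real (p k)) \<ge> \<delta>" by force
    have "Re (G z) = (\<Sum>k\<le>N. c k * ln (norm (z - of_real (p k))))"
      unfolding G_def by (rule ReG) (use z in simp)
    moreover have "Re (G z) = Y" using z by simp
    ultimately have "Y = (\<Sum>k\<le>N. c k * ln (norm (z - of_real (p k))))" by simp
    also have "\<dots> \<le> (\<Sum>k\<le>N. \<bar>c k\<bar>) * ln (1 + 2*P/\<delta>)"
      using re_bound[OF sc P del far] z by simp
    also have "\<dots> \<le> A * ln (1 + 2*P/\<delta>)" using A P del by (intro mult_right_mono) auto
    finally show False using Y by simp
  qed
  have nonex: "False"
    if z: "Im z > 0" "G z = of_real Y" and m: "m \<le> N" "c m < 0" "norm (z - of_real (p m)) < \<delta>0"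
      and cm: "(\<Sum>k\<in>{m<..N}. c k) \<le> 0 \<or> (\<Sum>k\<in>{m<..N}. c k) \<ge> - c m" for z Y m
  proof -
    have lft: "\<And>k. k \<le> N \<Longrightarrow> k < m \<Longrightarrow> p k \<le> p m - d" using left m by auto
    have rgt: "\<And>k. k \<le> N \<Longrightarrow> m < k \<Longrightarrow> p m + d \<le> p k" using right by auto
    have "(\<Sum>k\<le>N. c k * Im (Ln (z - of_real (p k)))) \<noteq> 0"
      by (rule local_nonexist[where d=d and A=A and N=N and c=c and m=m and p=p and z=z and \<delta>=\<delta>0,
            OF dpos A m(1,2) lft rgt z(1) m(3) d0(2) d0c[OF m(1,2)] cm])
    moreover have "Im (G z) = (\<Sum>k\<le>N. c k * Im (Ln (z - of_real (p k))))"
      unfolding G_def by (rule ImG)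
    moreover have "Im (G z) = 0" using z by simp
    ultimately show False by simp
  qed
  show ?thesis
  proof (cases "s = 0 \<or> s = 1")
    case True
    show ?thesis
    proof (rule exI[of _ "A * ln (1 + 2*P/\<delta>0) + 1"], intro allI impI)
      fix Y :: real assume Y: "A * ln (1 + 2*P/\<delta>0) + 1 \<le> Y"
      have "\<forall>z. Im z > 0 \<longrightarrow> G z \<noteq> of_real Y"
      proof (intro allI impI notI)
        fix z assume z: "Im z > 0" "G z = of_real Y"
        obtain m where m: "m \<le> N" "c m < 0" "norm (z - of_real (p m)) < \<delta>0"
          using confine[OF z d0(1)] Y by force
        have cm: "(\<Sum>k\<in>{m<..N}. c k) \<le> 0 \<or> (\<Sum>k\<in>{m<..N}. c k) \<ge> - c m"
        proof (cases "m = j")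
          case True then show ?thesis using \<open>s = 0 \<or> s = 1\<close> j s01 by (auto simp: s_def)
        next
          case False then show ?thesis using cond m by blast
        qed
        show False by (rule nonex[OF z m cm])
      qed
      thus "if (\<Sum>k\<in>{j<..N}. c k) = 0 \<or> (\<Sum>k\<in>{j<..N}. c k) = 1 then \<forall>z. Im z > 0 \<longrightarrow> (\<Sum>k\<le>N. of_real (c k) * Ln (z - of_real (p k))) \<noteq> of_real Y
        else \<exists>!z. Im z > 0 \<and> (\<Sum>k\<le>N. of_real (c k) * Ln (z - of_real (p k))) = of_real Y"
        using True by (simp add: G_def s_def)
    qed
  next
    case False
    have sj: "0 < s" "s < 1" using False s01 by (auto simp: s_def)
    have lftj: "\<And>k. k \<le> N \<Longrightarrow> k < j \<Longrightarrow> p k \<le> p j - d" using left j by auto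
    have rgtj: "\<And>k. k \<le> N \<Longrightarrow> j < k \<Longrightarrow> p j + d \<le> p k" using right by auto
    have "\<exists>\<rho>>0. \<exists>Y0. \<forall>Y\<ge>Y0. \<exists>!z. Im z > 0 \<and> norm (z - of_real (p j)) < \<rho> \<and>
            (\<Sum>k\<le>N. of_real (c k) * Ln (z - of_real (p k))) = of_real Y"
      by (rule local_exist_unique[where d=d and A=A and N=N and c=c and j=j and p=p and P=P,
            OF dpos A P j lftj rgtj]) (use sj in \<open>auto simp: s_def\<close>)
    then obtain \<rho> Y1 where rho: "\<rho> > 0" and
      EU: "\<And>Y. Y \<ge> Y1 \<Longrightarrow> \<exists>!z. Im z > 0 \<and> norm (z - of_real (p j)) < \<rho> \<and> G z = of_real Y"
      unfolding G_def by blast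
    define \<delta>1 where "\<delta>1 = min \<delta>0 \<rho>"
    have d1: "\<delta>1 > 0" "\<delta>1 \<le> \<delta>0" "\<delta>1 \<le> \<rho>" using d0 rho by (auto simp: \<delta>1_def)
    show ?thesis
    proof (rule exI[of _ "max Y1 (A * ln (1 + 2*P/\<delta>1) + 1)"], intro allI impI)
      fix Y :: real assume Y: "max Y1 (A * ln (1 + 2*P/\<delta>1) + 1) \<le> Y"
      obtain z0 where z0: "Im z0 > 0" "norm (z0 - of_real (p j)) < \<rho>" "G z0 = of_real Y"
        and z0u: "\<And>z. Im z > 0 \<Longrightarrow> norm (z - of_real (p j)) < \<rho> \<Longrightarrow> G z = of_real Y \<Longrightarrow> z = z0"
      proof -
        have "Y1 \<le> Y" using Y by simp
        from EU[OF this] show ?thesis by (elim ex1E) (rule that, blast+)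
      qed
      have "\<exists>!z. Im z > 0 \<and> G z = of_real Y"
      proof (rule ex1I[of _ z0])
        show "Im z0 > 0 \<and> G z0 = of_real Y" using z0 by simp
      next
        fix z assume z: "Im z > 0 \<and> G z = of_real Y"
        obtain m where m: "m \<le> N" "c m < 0" "norm (z - of_real (p m)) < \<delta>1"
      proof -
        have Yg: "Y > A * ln (1 + 2*P/\<delta>1)" using Y by simp
        show ?thesis using confine[OF conjunct1[OF z] conjunct2[OF z] d1(1) Yg] that by blast
      qed
        show "z = z0"
        proof (cases "m = j")
          case True
          thus ?thesis using z0u[of z] z m d1 by simp
        next
          case False
          have "norm (z - of_real (p m)) < \<delta>0" using m d1 by simp
          moreover have "(\<Sum>k\<in>{m<..N}. c k) \<le> 0 \<or> (\<Sum>k\<in>{m<..N}. c k) \<ge> - c m" using cond m False by blast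
          ultimately show ?thesis using nonex[of z Y m] z m by blast
        qed
      qed
      thus "if (\<Sum>k\<in>{j<..N}. c k) = 0 \<or> (\<Sum>k\<in>{j<..N}. c k) = 1 then \<forall>z. Im z > 0 \<longrightarrow> (\<Sum>k\<le>N. of_real (c k) * Ln (z - of_real (p k))) \<noteq> of_real Y
        else \<exists>!z. Im z > 0 \<and> (\<Sum>k\<le>N. of_real (c k) * Ln (z - of_real (p k))) = of_real Y"
        using False by (simp add: G_def s_def)
    qed
  qed
qed



lemma nonreal1:
  assumes "Im z \<noteq> 0"
  shows "Im (1 - exp (complex_of_real M) / z) \<noteq> 0"
proof -
  have "Im (1 - exp (complex_of_real M) / z) = exp M * Im z / (norm z)^2"
    by (simp add: exp_of_real Im_divide cmod_power2)
  moreover have "z \<noteq> 0" using assms by auto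
  ultimately show ?thesis using assms by simp
qed

lemma nonreal2:
  assumes "Im z \<noteq> 0"
  shows "Im (1 - exp (- complex_of_real M) * z) \<noteq> 0"
proof -
  have "exp (- complex_of_real M) = of_real (exp (-M))" by (simp add: exp_of_real[symmetric])
  hence "Im (1 - exp (- complex_of_real M) * z) = - exp (-M) * Im z" by simp
  thus ?thesis using assms by simp
qed

lemma nonpos_of_nonreal: "Im w \<noteq> 0 \<Longrightarrow> w \<notin> \<real>\<^sub>\<le>\<^sub>0"
  by (auto simp: complex_nonpos_Reals_iff)

lemma ball_nonreal:
  assumes "Im z0 \<noteq> 0" "z \<in> ball z0 \<bar>Im z0\<bar>" shows "Im z \<noteq> 0"
proof
  assume "Im z = 0"
  have "\<bar>Im (z0 - z)\<bar> \<le> norm (z0 - z)" by (rule abs_Im_le_cmod)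
  thus False using assms \<open>Im z = 0\<close> by (simp add: dist_norm)
qed

lemma I1_deriv:
  fixes a b :: real
  assumes ab: "a \<le> b" and z0: "Im z0 \<noteq> 0"
  shows "((\<lambda>z. integral {a..b} (\<lambda>M. Ln (1 - exp (complex_of_real M) / z))) has_field_derivative
          - (Ln (1 - exp (complex_of_real b) / z0) - Ln (1 - exp (complex_of_real a) / z0)) / z0) (at z0)"
proof -
  define U where "U = ball z0 \<bar>Im z0\<bar>"
  have U: "open U" "convex U" "z0 \<in> U" using z0 by (auto simp: U_def)
  have Uim: "Im z \<noteq> 0" if "z \<in> U" for z using ball_nonreal[OF z0] that by (simp add: U_def)
  define fx where "fx z M = inverse (1 - exp (complex_of_real M) / z) * (exp (complex_of_real M) / z^2)" for z M
  have dz: "((\<lambda>z. Ln (1 - exp (complex_of_real M) / z)) has_field_derivative fx z M) (at z within U)"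
    if "z \<in> U" for z M
  proof -
    have zn: "z \<noteq> 0" using Uim[OF that] by auto
    have g: "((\<lambda>z. 1 - exp (complex_of_real M) / z) has_field_derivative exp (complex_of_real M) / z^2) (at z within U)"
      using zn by (auto intro!: derivative_eq_intros simp: power2_eq_square field_simps)
    have "((\<lambda>z. Ln (1 - exp (complex_of_real M) / z)) has_field_derivative
        inverse (1 - exp (complex_of_real M) / z) * (exp (complex_of_real M) / z^2)) (at z within U)"
      by (rule DERIV_chain2[where g="\<lambda>z. 1 - exp (complex_of_real M) / z",
            OF has_field_derivative_Ln[OF nonpos_of_nonreal[OF nonreal1[OF Uim[OF that]]]] g])
    thus ?thesis by (simp add: fx_def)
  qed
  have int: "(\<lambda>M. Ln (1 - exp (complex_of_real M) / z)) integrable_on cbox a b" if "z \<in> U" for z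
  proof -
    have "continuous_on {a..b} (\<lambda>M. Ln (1 - exp (complex_of_real M) / z))"
      using nonpos_of_nonreal[OF nonreal1[OF Uim[OF that]]] Uim[OF that]
      by (intro continuous_intros) auto
    thus ?thesis by (simp add: integrable_continuous_interval)
  qed
  have cont: "continuous_on (U \<times> cbox a b) (\<lambda>(z, M). fx z M)"
  proof -
    have "continuous_on (U \<times> cbox a b) (\<lambda>x. inverse (1 - exp (complex_of_real (snd x)) / fst x) *
           (exp (complex_of_real (snd x)) / (fst x)^2))"
    proof (intro continuous_intros ballI)
      fix x assume x: "x \<in> U \<times> cbox a b"
      have "Im (fst x) \<noteq> 0" using x Uim by auto
      thus "fst x \<noteq> 0" "(fst x)^2 \<noteq> 0" "1 - exp (complex_of_real (snd x)) / fst x \<noteq> 0"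
        using nonreal1[of "fst x" "snd x"] by auto
    qed
    thus ?thesis by (simp add: fx_def split_beta)
  qed
  have L: "((\<lambda>z. integral (cbox a b) (\<lambda>M. Ln (1 - exp (complex_of_real M) / z))) has_field_derivative
       integral (cbox a b) (fx z0)) (at z0 within U)"
    by (rule leibniz_rule_field_derivative[OF _ int cont U(3) U(2)]) (rule dz)
  hence L': "((\<lambda>z. integral {a..b} (\<lambda>M. Ln (1 - exp (complex_of_real M) / z))) has_field_derivative
       integral {a..b} (fx z0)) (at z0)"
    using at_within_open[OF U(3) U(1)] by simp
  define Fc where "Fc w = - (1/z0) * Ln (1 - exp w / z0)" for w
  have FTC: "(fx z0 has_integral (Fc (of_real b) - Fc (of_real a))) {a..b}"
  proof (rule fundamental_theorem_of_calculus[OF ab])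
    fix x assume "x \<in> {a..b}"
    have nz: "1 - exp (complex_of_real x) / z0 \<notin> \<real>\<^sub>\<le>\<^sub>0" using nonpos_of_nonreal[OF nonreal1[OF z0]] .
    have g: "((\<lambda>w. 1 - exp w / z0) has_field_derivative - (exp (complex_of_real x) / z0)) (at (complex_of_real x))"
      using z0 by (auto intro!: derivative_eq_intros)
    have "((\<lambda>w. Ln (1 - exp w / z0)) has_field_derivative
          inverse (1 - exp (complex_of_real x) / z0) * - (exp (complex_of_real x) / z0)) (at (complex_of_real x))"
      by (rule DERIV_chain2[where g="\<lambda>w. 1 - exp w / z0", OF has_field_derivative_Ln[OF nz] g])
    hence "(Fc has_field_derivative - (1/z0) * (inverse (1 - exp (complex_of_real x) / z0) * - (exp (complex_of_real x) / z0)))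
        (at (complex_of_real x))" unfolding Fc_def by (rule DERIV_cmult)
    moreover have "- (1/z0) * (inverse (1 - exp (complex_of_real x) / z0) * - (exp (complex_of_real x) / z0)) = fx z0 x"
      by (simp add: fx_def power2_eq_square field_simps)
    ultimately have "(Fc has_field_derivative fx z0 x) (at (complex_of_real x))" by simp
    thus "((\<lambda>x. Fc (of_real x)) has_vector_derivative fx z0 x) (at x within {a..b})"
      by (rule has_vector_derivative_real_field)
  qed
  have "integral {a..b} (fx z0) = - (Ln (1 - exp (complex_of_real b) / z0) - Ln (1 - exp (complex_of_real a) / z0)) / z0"
  proof -
    have z0n: "z0 \<noteq> 0" using z0 by auto
    show ?thesis using integral_unique[OF FTC] z0n by (simp add: Fc_def field_simps)
  qed
  thus ?thesis using L' by simp
qed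

lemma I2_deriv:
  fixes a b :: real
  assumes ab: "a \<le> b" and z0: "Im z0 \<noteq> 0"
  shows "((\<lambda>z. integral {a..b} (\<lambda>M. Ln (1 - exp (- complex_of_real M) * z))) has_field_derivative
          - (Ln (1 - exp (- complex_of_real b) * z0) - Ln (1 - exp (- complex_of_real a) * z0)) / z0) (at z0)"
proof -
  define U where "U = ball z0 \<bar>Im z0\<bar>"
  have U: "open U" "convex U" "z0 \<in> U" using z0 by (auto simp: U_def)
  have Uim: "Im z \<noteq> 0" if "z \<in> U" for z using ball_nonreal[OF z0] that by (simp add: U_def)
  define fx where "fx z M = inverse (1 - exp (- complex_of_real M) * z) * (- exp (- complex_of_real M))" for z M
  have dz: "((\<lambda>z. Ln (1 - exp (- complex_of_real M) * z)) has_field_derivative fx z M) (at z within U)"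
    if "z \<in> U" for z M
  proof -
    have g: "((\<lambda>z. 1 - exp (- complex_of_real M) * z) has_field_derivative - exp (- complex_of_real M)) (at z within U)"
      by (auto intro!: derivative_eq_intros)
    have "((\<lambda>z. Ln (1 - exp (- complex_of_real M) * z)) has_field_derivative
        inverse (1 - exp (- complex_of_real M) * z) * (- exp (- complex_of_real M))) (at z within U)"
      by (rule DERIV_chain2[where g="\<lambda>z. 1 - exp (- complex_of_real M) * z",
            OF has_field_derivative_Ln[OF nonpos_of_nonreal[OF nonreal2[OF Uim[OF that]]]] g])
    thus ?thesis by (simp add: fx_def)
  qed
  have int: "(\<lambda>M. Ln (1 - exp (- complex_of_real M) * z)) integrable_on cbox a b" if "z \<in> U" for z
  proof -
    have "continuous_on {a..b} (\<lambda>M. Ln (1 - exp (- complex_of_real M) * z))"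
      using nonpos_of_nonreal[OF nonreal2[OF Uim[OF that]]] Uim[OF that]
      by (intro continuous_intros) auto
    thus ?thesis by (simp add: integrable_continuous_interval)
  qed
  have cont: "continuous_on (U \<times> cbox a b) (\<lambda>(z, M). fx z M)"
  proof -
    have "continuous_on (U \<times> cbox a b) (\<lambda>x. inverse (1 - exp (- complex_of_real (snd x)) * fst x) *
           (- exp (- complex_of_real (snd x))))"
    proof (intro continuous_intros ballI)
      fix x assume x: "x \<in> U \<times> cbox a b"
      have "Im (fst x) \<noteq> 0" using x Uim by auto
      hence "Im (1 - exp (- complex_of_real (snd x)) * fst x) \<noteq> 0" by (rule nonreal2)
      thus "1 - exp (- complex_of_real (snd x)) * fst x \<noteq> 0" by (metis zero_complex.sel(2))
    qed
    thus ?thesis by (simp add: fx_def split_beta)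
  qed
  have L: "((\<lambda>z. integral (cbox a b) (\<lambda>M. Ln (1 - exp (- complex_of_real M) * z))) has_field_derivative
       integral (cbox a b) (fx z0)) (at z0 within U)"
    by (rule leibniz_rule_field_derivative[OF _ int cont U(3) U(2)]) (rule dz)
  hence L': "((\<lambda>z. integral {a..b} (\<lambda>M. Ln (1 - exp (- complex_of_real M) * z))) has_field_derivative
       integral {a..b} (fx z0)) (at z0)"
    using at_within_open[OF U(3) U(1)] by simp
  define Fc where "Fc w = - (1/z0) * Ln (1 - exp (- w) * z0)" for w
  have FTC: "(fx z0 has_integral (Fc (of_real b) - Fc (of_real a))) {a..b}"
  proof (rule fundamental_theorem_of_calculus[OF ab])
    fix x assume "x \<in> {a..b}"
    have nz: "1 - exp (- complex_of_real x) * z0 \<notin> \<real>\<^sub>\<le>\<^sub>0" using nonpos_of_nonreal[OF nonreal2[OF z0]] .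
    have g: "((\<lambda>w. 1 - exp (- w) * z0) has_field_derivative exp (- complex_of_real x) * z0) (at (complex_of_real x))"
      using z0 by (auto intro!: derivative_eq_intros)
    have "((\<lambda>w. Ln (1 - exp (- w) * z0)) has_field_derivative
          inverse (1 - exp (- complex_of_real x) * z0) * (exp (- complex_of_real x) * z0)) (at (complex_of_real x))"
      by (rule DERIV_chain2[where g="\<lambda>w. 1 - exp (- w) * z0", OF has_field_derivative_Ln[OF nz] g])
    hence "(Fc has_field_derivative - (1/z0) * (inverse (1 - exp (- complex_of_real x) * z0) * (exp (- complex_of_real x) * z0)))
        (at (complex_of_real x))" unfolding Fc_def by (rule DERIV_cmult)
    moreover have "- (1/z0) * (inverse (1 - exp (- complex_of_real x) * z0) * (exp (- complex_of_real x) * z0)) = fx z0 x"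
      using z0 by (auto simp: fx_def field_simps)
    ultimately have "(Fc has_field_derivative fx z0 x) (at (complex_of_real x))" by simp
    thus "((\<lambda>x. Fc (of_real x)) has_vector_derivative fx z0 x) (at x within {a..b})"
      by (rule has_vector_derivative_real_field)
  qed
  have "integral {a..b} (fx z0) = - (Ln (1 - exp (- complex_of_real b) * z0) - Ln (1 - exp (- complex_of_real a) * z0)) / z0"
  proof -
    have z0n: "z0 \<noteq> 0" using z0 by auto
    show ?thesis using integral_unique[OF FTC] z0n by (simp add: Fc_def field_simps)
  qed
  thus ?thesis using L' by simp
qed

lemma has_integral_pieces:
  fixes q :: "nat \<Rightarrow> real" and f :: "real \<Rightarrow> complex"
  assumes mono: "\<And>a b. m \<le> a \<Longrightarrow> a \<le> b \<Longrightarrow> b \<le> n' \<Longrightarrow> q a \<le> q b"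
    and pc: "\<And>k. Suc m \<le> k \<Longrightarrow> k \<le> n' \<Longrightarrow> (f has_integral I k) {q (k-1)..q k}"
  shows "m \<le> n' \<Longrightarrow> (f has_integral (\<Sum>k\<in>{Suc m..n'}. I k)) {q m..q n'}"
  using mono pc
proof (induction n')
  case 0
  hence "m = 0" by simp
  thus ?case using has_integral_refl(1)[of f "q 0"] by simp
next
  case (Suc n')
  show ?case
  proof (cases "m = Suc n'")
    case True
    thus ?thesis using has_integral_refl(1)[of f "q m"] by simp
  next
    case False
    hence mn: "m \<le> n'" using Suc.prems by simp
    have IH: "(f has_integral (\<Sum>k\<in>{Suc m..n'}. I k)) {q m..q n'}"
      using Suc.IH[OF mn] Suc.prems by simp
    have last: "(f has_integral I (Suc n')) {q n'..q (Suc n')}" using Suc.prems(3)[of "Suc n'"] mn by simp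
    have "(f has_integral ((\<Sum>k\<in>{Suc m..n'}. I k) + I (Suc n'))) {q m..q (Suc n')}"
      by (rule has_integral_combine[OF _ _ IH last]) (use Suc.prems mn in auto)
    moreover have "(\<Sum>k\<in>{Suc m..Suc n'}. I k) = (\<Sum>k\<in>{Suc m..n'}. I k) + I (Suc n')"
      using mn by simp
    ultimately show ?thesis by simp
  qed
qed

lemma sum_by_parts:
  fixes w :: "nat \<Rightarrow> real" and f :: "nat \<Rightarrow> complex"
  shows "(\<Sum>k\<in>{1..N}. of_real (w k) * (f k - f (k - 1)))
       = (\<Sum>k<N. of_real (w k - w (Suc k)) * f k) + of_real (w N) * f N - of_real (w 0) * f 0"
proof (induction N)
  case 0 then show ?case by simp
next
  case (Suc N)
  have "(\<Sum>k\<in>{1..Suc N}. of_real (w k) * (f k - f (k - 1)))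
      = (\<Sum>k\<in>{1..N}. of_real (w k) * (f k - f (k - 1))) + of_real (w (Suc N)) * (f (Suc N) - f N)"
    by simp
  also have "\<dots> = (\<Sum>k<Suc N. of_real (w k - w (Suc k)) * f k) + of_real (w (Suc N)) * f (Suc N) - of_real (w 0) * f 0"
    using Suc.IH by (simp add: algebra_simps)
  finally show ?case .
qed

definition qq :: "nat \<Rightarrow> (nat \<Rightarrow> real) \<Rightarrow> real \<Rightarrow> nat \<Rightarrow> real" where
  "qq j Vs tau k = (if k < j then Vs k else if k = j then tau else Vs (k - 1))"

definition bb :: "nat \<Rightarrow> (nat \<Rightarrow> real) \<Rightarrow> nat \<Rightarrow> real" where
  "bb j beta k = (if k \<le> j then beta k else beta (k - 1))"

definition ww :: "nat \<Rightarrow> nat \<Rightarrow> (nat \<Rightarrow> real) \<Rightarrow> nat \<Rightarrow> real" where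
  "ww n j beta k = (if k = 0 then 0 else if k \<le> j then - (1 + bb j beta k) / 2
                    else if k \<le> Suc n then (1 - bb j beta k) / 2 else 0)"

lemma Vs_mono:
  assumes "pl_setting n Vs beta V"
  shows "a < b \<Longrightarrow> b \<le> n \<Longrightarrow> Vs a < Vs b"
proof (induction b)
  case 0 then show ?case by simp
next
  case (Suc b)
  have st: "Vs b < Vs (Suc b)" using assms Suc.prems by (simp add: pl_setting_def)
  show ?case
  proof (cases "a = b")
    case True then show ?thesis using st by simp
  next
    case False
    hence "Vs a < Vs b" using Suc by simp
    thus ?thesis using st by simp
  qed
qed

definition lf :: "real \<Rightarrow> complex \<Rightarrow> complex" where
  "lf x z = Ln (1 - exp (complex_of_real x) / z)"

definition mf :: "real \<Rightarrow> complex \<Rightarrow> complex" where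
  "mf x z = Ln (1 - exp (- complex_of_real x) * z)"

definition LamF :: "nat \<Rightarrow> nat \<Rightarrow> (nat \<Rightarrow> real) \<Rightarrow> (nat \<Rightarrow> real) \<Rightarrow> real \<Rightarrow> complex \<Rightarrow> complex" where
  "LamF n j Vs beta tau z =
     (\<Sum>k\<in>{1..j}. of_real (- (1 + bb j beta k) / 2) * (lf (qq j Vs tau k) z - lf (qq j Vs tau (k - 1)) z))
   + (\<Sum>k\<in>{Suc j..Suc n}. of_real ((1 - bb j beta k) / 2) * (mf (qq j Vs tau k) z - mf (qq j Vs tau (k - 1)) z))"

lemma neg_gen: "(c::complex) * (- D / Z) = (- c) * D / Z"
  by (simp add: divide_inverse algebra_simps)

lemma neg_term: "(complex_of_real ((1 + x) / 2)) * (- D / Z) = complex_of_real (- (1 + x) / 2) * D / Z"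
proof -
  have e: "- (1 + x) / 2 = - ((1 + x) / 2 :: real)" by (simp only: minus_divide_left)
  have "complex_of_real (- (1 + x) / 2) = - complex_of_real ((1 + x) / 2)" unfolding e by (rule of_real_minus)
  thus ?thesis unfolding neg_gen by (simp only:)
qed

lemma neg_term2: "(c::complex) * (- D / Z) = - (c * D / Z)"
  by (simp add: divide_inverse algebra_simps)

lemma cont1: "Im z \<noteq> 0 \<Longrightarrow> continuous_on S (\<lambda>M. Ln (1 - exp (complex_of_real M) / z))"
  using nonpos_of_nonreal[OF nonreal1] by (intro continuous_intros) auto

lemma cont2: "Im z \<noteq> 0 \<Longrightarrow> continuous_on S (\<lambda>M. Ln (1 - exp (- complex_of_real M) * z))"
  using nonpos_of_nonreal[OF nonreal2] by (intro continuous_intros) auto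

lemma lf_upper:
  assumes z: "Im z > 0" shows "lf x z = Ln (z - of_real (exp x)) - Ln z"
proof -
  have zn: "z \<noteq> 0" using z by auto
  have u: "Im (z - of_real (exp x)) > 0" using z by simp
  have un: "z - of_real (exp x) \<noteq> 0" using u by auto
  have zr: "z \<notin> \<real>\<^sub>\<le>\<^sub>0" using z by (auto simp: complex_nonpos_Reals_iff)
  have eq: "1 - exp (complex_of_real x) / z = (z - of_real (exp x)) * inverse z"
    using zn by (simp add: exp_of_real field_simps)
  have "Ln ((z - of_real (exp x)) * inverse z) = Ln (z - of_real (exp x)) + Ln (inverse z)"
  proof (rule Ln_times_simple[OF un])
    show "inverse z \<noteq> 0" using zn by simp
    have a: "0 < Im (Ln (z - of_real (exp x)))" "Im (Ln (z - of_real (exp x))) < pi" using Im_Ln_pos_bounds[OF u] by auto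
    have b: "0 < Im (Ln z)" "Im (Ln z) < pi" using Im_Ln_pos_bounds[OF z] by auto
    have "Ln (inverse z) = - Ln z" by (rule Ln_inverse[OF zr])
    thus "- pi < Im (Ln (z - of_real (exp x))) + Im (Ln (inverse z))"
         "Im (Ln (z - of_real (exp x))) + Im (Ln (inverse z)) \<le> pi" using a b by auto
  qed
  thus ?thesis unfolding lf_def eq using Ln_inverse[OF zr] by simp
qed

lemma mf_upper:
  assumes z: "Im z > 0" shows "mf x z = Ln (z - of_real (exp x)) - of_real x - \<i> * pi"
proof -
  have u: "Im (z - of_real (exp x)) > 0" using z by simp
  have un: "z - of_real (exp x) \<noteq> 0" using u by auto
  have eq: "1 - exp (- complex_of_real x) * z = of_real (exp (-x)) * (- (z - of_real (exp x)))"
  proof -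
    have "exp (- complex_of_real x) = of_real (exp (-x))" by (simp add: exp_of_real[symmetric])
    moreover have "exp (-x) * exp x = 1" by (simp add: exp_minus)
    ultimately show ?thesis by (simp add: algebra_simps) (metis of_real_1 of_real_mult)
  qed
  have "Ln (of_real (exp (-x)) * (- (z - of_real (exp x)))) = ln (exp (-x)) + Ln (- (z - of_real (exp x)))"
  proof -
    have r: "Ln (complex_of_real (exp (-x))) = of_real (ln (exp (-x)))" by (rule Ln_of_real) simp
    have wn: "- (z - of_real (exp x)) \<noteq> 0" using un by simp
    have "Ln (of_real (exp (-x)) * (- (z - of_real (exp x)))) = Ln (of_real (exp (-x))) + Ln (- (z - of_real (exp x)))"
      by (rule Ln_times_simple) (use wn r mpi_less_Im_Ln[OF wn] Im_Ln_le_pi[OF wn] in auto)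
    thus ?thesis using r by simp
  qed
  also have "Ln (- (z - of_real (exp x))) = Ln (z - of_real (exp x)) - \<i> * pi"
    using Ln_minus[OF un] u by simp
  finally show ?thesis unfolding mf_def eq by simp
qed

lemma lf_cnj: "Im z \<noteq> 0 \<Longrightarrow> lf x (cnj z) = cnj (lf x z)"
proof -
  assume z: "Im z \<noteq> 0"
  have "cnj (Ln (1 - exp (complex_of_real x) / z)) = Ln (cnj (1 - exp (complex_of_real x) / z))"
    by (rule cnj_Ln[OF nonpos_of_nonreal[OF nonreal1[OF z]]])
  also have "cnj (1 - exp (complex_of_real x) / z) = 1 - exp (complex_of_real x) / cnj z"
    by (simp add: exp_of_real)
  finally show ?thesis by (simp add: lf_def)
qed

lemma mf_cnj: "Im z \<noteq> 0 \<Longrightarrow> mf x (cnj z) = cnj (mf x z)"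
proof -
  assume z: "Im z \<noteq> 0"
  have "cnj (Ln (1 - exp (- complex_of_real x) * z)) = Ln (cnj (1 - exp (- complex_of_real x) * z))"
    by (rule cnj_Ln[OF nonpos_of_nonreal[OF nonreal2[OF z]]])
  also have "cnj (1 - exp (- complex_of_real x) * z) = 1 - exp (- complex_of_real x) * cnj z"
  proof -
    have "exp (- complex_of_real x) = of_real (exp (-x))" by (simp add: exp_of_real[symmetric])
    thus ?thesis by simp
  qed
  finally show ?thesis by (simp add: mf_def)
qed

lemma LamF_cnj: "Im z \<noteq> 0 \<Longrightarrow> LamF n j Vs beta tau (cnj z) = cnj (LamF n j Vs beta tau z)"
  by (simp add: LamF_def lf_cnj mf_cnj cnj_sum)

locale setting =
  fixes n j :: nat and Vs beta :: "nat \<Rightarrow> real" and V :: "real \<Rightarrow> real" and tau :: real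
  assumes pl: "pl_setting n Vs beta V"
    and j1: "1 \<le> j" and jn: "j \<le> n"
    and tl: "Vs (j - 1) < tau" and tr: "tau < Vs j"
begin

abbreviation "q \<equiv> qq j Vs tau"
abbreviation "b \<equiv> bb j beta"
abbreviation "w \<equiv> ww n j beta"

lemma q_mono: assumes k: "k < Suc n" shows "q k < q (Suc k)"
proof -
  consider "Suc k < j" | "Suc k = j" | "k = j" | "j < k" by linarith
  thus ?thesis
  proof cases
    case 1
    hence "q k = Vs k" "q (Suc k) = Vs (Suc k)" by (auto simp: qq_def)
    moreover have "Vs k < Vs (Suc k)" using Vs_mono[OF pl, of k "Suc k"] 1 jn by simp
    ultimately show ?thesis by simp
  next
    case 2
    hence "q k = Vs (j - 1)" "q (Suc k) = tau" by (auto simp: qq_def)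
    thus ?thesis using tl by simp
  next
    case 3
    hence "q k = tau" "q (Suc k) = Vs j" by (auto simp: qq_def)
    thus ?thesis using tr by simp
  next
    case 4
    hence "q k = Vs (k - 1)" "q (Suc k) = Vs k" by (auto simp: qq_def)
    moreover have "Vs (k - 1) < Vs k" using Vs_mono[OF pl, of "k - 1" k] 4 k by simp
    ultimately show ?thesis by simp
  qed
qed

lemma q_mono_le: "a \<le> c \<Longrightarrow> c \<le> Suc n \<Longrightarrow> q a \<le> q c"
proof (induction c)
  case 0 then show ?case by simp
next
  case (Suc c)
  show ?case
  proof (cases "a = Suc c")
    case True then show ?thesis by simp
  next
    case False
    hence "q a \<le> q c" using Suc by simp
    also have "q c < q (Suc c)" using q_mono Suc.prems by simp
    finally show ?thesis by simp
  qed
qed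

lemma q0: "q 0 = Vs 0" using j1 by (simp add: qq_def)
lemma qj: "q j = tau" by (simp add: qq_def)
lemma qN: "q (Suc n) = Vs n" using jn by (simp add: qq_def)

lemma beta_range: "1 \<le> i \<Longrightarrow> i \<le> n \<Longrightarrow> -1 \<le> beta i \<and> beta i \<le> 1"
  using pl by (auto simp: pl_setting_def)

lemma deriv_piece:
  assumes k: "1 \<le> k" "k \<le> Suc n" and M: "q (k - 1) < M" "M < q k"
  shows "deriv V M = b k"
proof -
  define i where "i = (if k \<le> j then k else k - 1)"
  have i: "1 \<le> i" "i \<le> n" using k j1 jn by (auto simp: i_def)
  have lo: "Vs (i - 1) \<le> q (k - 1)"
  proof -
    consider "k \<le> j" | "k - 1 = j" | "j < k - 1" by linarith
    thus ?thesis
    proof cases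
      case 1 thus ?thesis using k by (simp add: qq_def i_def)
    next
      case 2
      hence "\<not> k \<le> j" using k by linarith
      hence "i = j" "q (k - 1) = tau" using 2 by (auto simp: i_def qq_def)
      thus ?thesis using tl by simp
    next
      case 3
      hence "q (k - 1) = Vs (k - 1 - 1)" "i - 1 = k - 1 - 1" by (auto simp: qq_def i_def)
      thus ?thesis by simp
    qed
  qed
  have hi: "q k \<le> Vs i"
  proof -
    consider "k < j" | "k = j" | "j < k" by linarith
    thus ?thesis
    proof cases
      case 1 thus ?thesis by (simp add: qq_def i_def)
    next
      case 2 thus ?thesis using tr by (simp add: qq_def i_def)
    next
      case 3 thus ?thesis by (simp add: qq_def i_def)
    qed
  qed
  have lin: "V x = V (Vs (i - 1)) + beta i * (x - Vs (i - 1))" if "x \<in> {Vs (i - 1)<..<Vs i}" for x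
  proof -
    have "\<forall>i\<in>{1..n}. \<forall>M\<in>{Vs (i-1)..Vs i}. V M = V (Vs (i-1)) + beta i * (M - Vs (i-1))"
      using pl unfolding pl_setting_def by blast
    moreover have "i \<in> {1..n}" using i by simp
    moreover have "x \<in> {Vs (i-1)..Vs i}" using that by simp
    ultimately show ?thesis by blast
  qed
  have der: "((\<lambda>x. V (Vs (i - 1)) + beta i * (x - Vs (i - 1))) has_field_derivative beta i) (at M)"
    by (auto intro!: derivative_eq_intros)
  have Mi: "M \<in> {Vs (i - 1)<..<Vs i}" using lo hi M by simp
  have "(V has_field_derivative beta i) (at M)"
  proof (rule has_field_derivative_transform_within_open[OF der open_greaterThanLessThan Mi])
    fix x assume x: "x \<in> {Vs (i - 1)<..<Vs i}"
    show "V (Vs (i - 1)) + beta i * (x - Vs (i - 1)) = V x" using lin[OF x] by simp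
  qed
  hence "deriv V M = beta i" by (rule DERIV_imp_deriv)
  moreover have "b k = beta i" by (simp add: bb_def i_def)
  ultimately show ?thesis by simp
qed


definition I1 :: "nat \<Rightarrow> complex \<Rightarrow> complex" where
  "I1 k z = integral {q (k - 1)..q k} (\<lambda>M. Ln (1 - exp (complex_of_real M) / z))"

definition I2 :: "nat \<Rightarrow> complex \<Rightarrow> complex" where
  "I2 k z = integral {q (k - 1)..q k} (\<lambda>M. Ln (1 - exp (- complex_of_real M) * z))"

lemma S_decomp:
  assumes z: "Im z \<noteq> 0"
  shows "S_fun n Vs V tau chi z = (\<Sum>k\<in>{1..j}. of_real ((1 + b k) / 2) * I1 k z)
      - (\<Sum>k\<in>{Suc j..Suc n}. of_real ((1 - b k) / 2) * I2 k z) - of_real (chi - V tau / 2) * Ln z"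
proof -
  have i1: "((\<lambda>M. complex_of_real ((1 + deriv V M) / 2) * Ln (1 - exp (complex_of_real M) / z)) has_integral
      (\<Sum>k\<in>{Suc 0..j}. of_real ((1 + b k) / 2) * I1 k z)) {q 0..q j}"
  proof (rule has_integral_pieces)
    show "q a \<le> q c" if "0 \<le> a" "a \<le> c" "c \<le> j" for a c using q_mono_le that jn by simp
    show "0 \<le> j" by simp
    fix k assume k: "Suc 0 \<le> k" "k \<le> j"
    have "((\<lambda>M. Ln (1 - exp (complex_of_real M) / z)) has_integral I1 k z) {q (k - 1)..q k}"
      unfolding I1_def by (intro integrable_integral integrable_continuous_interval cont1 z)
    hence h: "((\<lambda>M. complex_of_real ((1 + b k) / 2) * Ln (1 - exp (complex_of_real M) / z)) has_integral
        complex_of_real ((1 + b k) / 2) * I1 k z) {q (k - 1)..q k}" by (rule has_integral_mult_right)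
    show "((\<lambda>M. complex_of_real ((1 + deriv V M) / 2) * Ln (1 - exp (complex_of_real M) / z)) has_integral
        complex_of_real ((1 + b k) / 2) * I1 k z) {q (k - 1)..q k}"
    proof (rule has_integral_spike_finite[OF _ _ h])
      show "finite {q (k - 1), q k}" by simp
      fix x assume "x \<in> {q (k - 1)..q k} - {q (k - 1), q k}"
      hence "q (k - 1) < x" "x < q k" by auto
      hence "deriv V x = b k" using deriv_piece[of k x] k jn by simp
      thus "complex_of_real ((1 + deriv V x) / 2) * Ln (1 - exp (complex_of_real x) / z) =
            complex_of_real ((1 + b k) / 2) * Ln (1 - exp (complex_of_real x) / z)" by simp
    qed
  qed
  have i2: "((\<lambda>M. complex_of_real ((1 - deriv V M) / 2) * Ln (1 - exp (- complex_of_real M) * z)) has_integral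
      (\<Sum>k\<in>{Suc j..Suc n}. of_real ((1 - b k) / 2) * I2 k z)) {q j..q (Suc n)}"
  proof (rule has_integral_pieces)
    show "q a \<le> q c" if "j \<le> a" "a \<le> c" "c \<le> Suc n" for a c using q_mono_le that by simp
    show "j \<le> Suc n" using jn by simp
    fix k assume k: "Suc j \<le> k" "k \<le> Suc n"
    have "((\<lambda>M. Ln (1 - exp (- complex_of_real M) * z)) has_integral I2 k z) {q (k - 1)..q k}"
      unfolding I2_def by (intro integrable_integral integrable_continuous_interval cont2 z)
    hence h: "((\<lambda>M. complex_of_real ((1 - b k) / 2) * Ln (1 - exp (- complex_of_real M) * z)) has_integral
        complex_of_real ((1 - b k) / 2) * I2 k z) {q (k - 1)..q k}" by (rule has_integral_mult_right)
    show "((\<lambda>M. complex_of_real ((1 - deriv V M) / 2) * Ln (1 - exp (- complex_of_real M) * z)) has_integral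
        complex_of_real ((1 - b k) / 2) * I2 k z) {q (k - 1)..q k}"
    proof (rule has_integral_spike_finite[OF _ _ h])
      show "finite {q (k - 1), q k}" by simp
      fix x assume "x \<in> {q (k - 1)..q k} - {q (k - 1), q k}"
      hence "q (k - 1) < x" "x < q k" by auto
      hence "deriv V x = b k" using deriv_piece[of k x] k by simp
      thus "complex_of_real ((1 - deriv V x) / 2) * Ln (1 - exp (- complex_of_real x) * z) =
            complex_of_real ((1 - b k) / 2) * Ln (1 - exp (- complex_of_real x) * z)" by simp
    qed
  qed
  show ?thesis
    unfolding S_fun_def using integral_unique[OF i1] integral_unique[OF i2] q0 qj qN by simp
qed


abbreviation "Lam \<equiv> LamF n j Vs beta tau"

lemma open_nonreal: "open {z::complex. Im z \<noteq> 0}"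
proof -
  have "{z::complex. Im z \<noteq> 0} = {z. Im z < 0} \<union> {z. Im z > 0}" by auto
  thus ?thesis by (simp add: open_Un open_halfspace_Im_lt open_halfspace_Im_gt)
qed

lemma S_deriv:
  assumes z0: "Im z0 \<noteq> 0"
  shows "(S_fun n Vs V tau chi has_field_derivative (Lam z0 - of_real (chi - V tau / 2)) / z0) (at z0)"
proof -
  define X where "X = complex_of_real (chi - V tau / 2)"
  define F where "F z = (\<Sum>k\<in>{1..j}. of_real ((1 + b k) / 2) * I1 k z)
      - (\<Sum>k\<in>{Suc j..Suc n}. of_real ((1 - b k) / 2) * I2 k z) - X * Ln z" for z
  have z0n: "z0 \<noteq> 0" using z0 by auto
  have d1: "(I1 k has_field_derivative - (lf (q k) z0 - lf (q (k - 1)) z0) / z0) (at z0)" if "k \<le> Suc n" for k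
    unfolding I1_def lf_def by (rule I1_deriv[OF q_mono_le z0]) (use that in auto)
  have d2: "(I2 k has_field_derivative - (mf (q k) z0 - mf (q (k - 1)) z0) / z0) (at z0)" if "k \<le> Suc n" for k
    unfolding I2_def mf_def by (rule I2_deriv[OF q_mono_le z0]) (use that in auto)
  define A where "A = (\<Sum>k\<in>{1..j}. of_real (- (1 + b k) / 2) * (lf (q k) z0 - lf (q (k - 1)) z0))"
  define B where "B = (\<Sum>k\<in>{Suc j..Suc n}. of_real ((1 - b k) / 2) * (mf (q k) z0 - mf (q (k - 1)) z0))"
  have LA: "Lam z0 = A + B" by (simp add: LamF_def A_def B_def)
  have t1: "((\<lambda>z. of_real ((1 + b k) / 2) * I1 k z) has_field_derivative
        of_real (- (1 + b k) / 2) * (lf (q k) z0 - lf (q (k - 1)) z0) / z0) (at z0)" if "k \<in> {1..j}" for k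
  proof -
    have "((\<lambda>z. of_real ((1 + b k) / 2) * I1 k z) has_field_derivative
        of_real ((1 + b k) / 2) * (- (lf (q k) z0 - lf (q (k - 1)) z0) / z0)) (at z0)"
      using d1[of k] that jn by (intro DERIV_cmult) auto
    thus ?thesis unfolding neg_term .
  qed
  have t2: "((\<lambda>z. of_real ((1 - b k) / 2) * I2 k z) has_field_derivative
        - (of_real ((1 - b k) / 2) * (mf (q k) z0 - mf (q (k - 1)) z0) / z0)) (at z0)" if "k \<in> {Suc j..Suc n}" for k
  proof -
    have "((\<lambda>z. of_real ((1 - b k) / 2) * I2 k z) has_field_derivative
        of_real ((1 - b k) / 2) * (- (mf (q k) z0 - mf (q (k - 1)) z0) / z0)) (at z0)"
      using d2[of k] that by (intro DERIV_cmult) auto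
    moreover have "of_real ((1 - b k) / 2) * (- (mf (q k) z0 - mf (q (k - 1)) z0) / z0)
        = - (of_real ((1 - b k) / 2) * (mf (q k) z0 - mf (q (k - 1)) z0) / z0)"
      by (rule neg_term2)
    ultimately show ?thesis by simp
  qed
  have dF: "(F has_field_derivative A / z0 - (- (B / z0)) - X * inverse z0) (at z0)"
    unfolding F_def A_def B_def sum_divide_distrib sum_negf[symmetric]
  proof (intro DERIV_diff DERIV_sum DERIV_cmult)
    show "((\<lambda>z. of_real ((1 + b k) / 2) * I1 k z) has_field_derivative
        of_real (- (1 + b k) / 2) * (lf (q k) z0 - lf (q (k - 1)) z0) / z0) (at z0)" if "k \<in> {1..j}" for k
      using t1[OF that] .
    show "((\<lambda>z. of_real ((1 - b k) / 2) * I2 k z) has_field_derivative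
        - (of_real ((1 - b k) / 2) * (mf (q k) z0 - mf (q (k - 1)) z0) / z0)) (at z0)" if "k \<in> {Suc j..Suc n}" for k
      using t2[OF that] .
    show "(Ln has_field_derivative inverse z0) (at z0)"
      by (rule has_field_derivative_Ln[OF nonpos_of_nonreal[OF z0]])
  qed
  have alg: "\<And>A B Z :: complex. A / Z - - (B / Z) - X * inverse Z = (A + B - X) / Z"
    by (simp add: divide_inverse algebra_simps)
  have eq: "A / z0 - (- (B / z0)) - X * inverse z0 = (Lam z0 - X) / z0" unfolding LA by (rule alg)
  have SF: "F z = S_fun n Vs V tau chi z" if "Im z \<noteq> 0" for z
    unfolding F_def X_def by (rule S_decomp[OF that, symmetric])
  have "(S_fun n Vs V tau chi has_field_derivative (Lam z0 - X) / z0) (at z0)"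
  proof (rule has_field_derivative_transform_within_open[OF dF[unfolded eq] open_nonreal])
    show "z0 \<in> {z. Im z \<noteq> 0}" using z0 by simp
    fix x assume "x \<in> {z. Im z \<noteq> 0}"
    hence "Im x \<noteq> 0" by simp
    thus "F x = S_fun n Vs V tau chi x" by (rule SF)
  qed
  thus ?thesis unfolding X_def .
qed


lemma w0: "w 0 = 0" by (simp add: ww_def)
lemma wN: "w (Suc (Suc n)) = 0" using jn by (simp add: ww_def)
lemma w_left: "1 \<le> k \<Longrightarrow> k \<le> j \<Longrightarrow> w k = - (1 + b k) / 2" by (simp add: ww_def)
lemma w_right: "j < k \<Longrightarrow> k \<le> Suc n \<Longrightarrow> w k = (1 - b k) / 2" using j1 by (simp add: ww_def)

definition K :: real where "K = - (\<Sum>k\<in>{Suc j..Suc n}. (1 - b k) / 2 * (q k - q (k - 1)))"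

lemma Lam_upper:
  assumes z: "Im z > 0"
  shows "Lam z = (\<Sum>k\<le>Suc n. of_real (w k - w (Suc k)) * Ln (z - of_real (exp (q k)))) + of_real K"
proof -
  define L where "L k = Ln (z - of_real (exp (q k)))" for k
  have left: "of_real (- (1 + b k) / 2) * (lf (q k) z - lf (q (k - 1)) z) = of_real (w k) * (L k - L (k - 1))"
    if "k \<in> {1..j}" for k
  proof -
    have e: "w k = - (1 + b k) / 2" using that w_left[of k] by simp
    have "lf (q k) z - lf (q (k - 1)) z = L k - L (k - 1)" by (simp add: lf_upper[OF z] L_def)
    thus ?thesis unfolding e by simp
  qed
  have right: "of_real ((1 - b k) / 2) * (mf (q k) z - mf (q (k - 1)) z)
      = of_real (w k) * (L k - L (k - 1)) - of_real ((1 - b k) / 2 * (q k - q (k - 1)))"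
    if "k \<in> {Suc j..Suc n}" for k
  proof -
    have d: "mf (q k) z - mf (q (k - 1)) z = (L k - L (k - 1)) - of_real (q k - q (k - 1))"
      by (simp add: mf_upper[OF z] L_def)
    have e: "w k = (1 - b k) / 2" using that w_right[of k] by simp
    show ?thesis unfolding e d by (simp add: field_simps)
  qed
  have "Lam z = (\<Sum>k\<in>{1..j}. of_real (w k) * (L k - L (k - 1)))
      + ((\<Sum>k\<in>{Suc j..Suc n}. of_real (w k) * (L k - L (k - 1))) + of_real K)"
  proof -
    have A: "(\<Sum>k\<in>{1..j}. of_real (- (1 + b k) / 2) * (lf (q k) z - lf (q (k - 1)) z))
        = (\<Sum>k\<in>{1..j}. of_real (w k) * (L k - L (k - 1)))" by (rule sum.cong[OF refl left])
    have B: "(\<Sum>k\<in>{Suc j..Suc n}. of_real ((1 - b k) / 2) * (mf (q k) z - mf (q (k - 1)) z))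
        = (\<Sum>k\<in>{Suc j..Suc n}. of_real (w k) * (L k - L (k - 1)))
          - (\<Sum>k\<in>{Suc j..Suc n}. of_real ((1 - b k) / 2 * (q k - q (k - 1))))"
      unfolding sum_subtractf[symmetric] by (rule sum.cong[OF refl right])
    have KK: "of_real K = - (\<Sum>k\<in>{Suc j..Suc n}. (of_real ((1 - b k) / 2 * (q k - q (k - 1))) :: complex))"
      unfolding K_def of_real_minus of_real_sum ..
    show ?thesis unfolding LamF_def A B KK by (simp only: diff_conv_add_uminus)
  qed
  also have "\<dots> = (\<Sum>k\<in>{1..Suc n}. of_real (w k) * (L k - L (k - 1))) + of_real K"
  proof -
    have un: "{1..Suc n} = {1..j} \<union> {Suc j..Suc n}" using j1 jn by auto
    have "(\<Sum>k\<in>{1..Suc n}. of_real (w k) * (L k - L (k - 1)))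
        = (\<Sum>k\<in>{1..j}. of_real (w k) * (L k - L (k - 1))) + (\<Sum>k\<in>{Suc j..Suc n}. of_real (w k) * (L k - L (k - 1)))"
      unfolding un by (rule sum.union_disjoint) auto
    thus ?thesis by simp
  qed
  also have "(\<Sum>k\<in>{1..Suc n}. of_real (w k) * (L k - L (k - 1)))
      = (\<Sum>k<Suc n. of_real (w k - w (Suc k)) * L k) + of_real (w (Suc n)) * L (Suc n) - of_real (w 0) * L 0"
    by (rule sum_by_parts)
  also have "\<dots> = (\<Sum>k\<le>Suc n. of_real (w k - w (Suc k)) * L k)"
    using w0 wN by (simp add: lessThan_Suc_atMost[symmetric])
  finally show ?thesis by (simp add: L_def)
qed

lemma c_sum: "(\<Sum>k\<le>Suc n. w k - w (Suc k)) = 0"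
  using sum_telescope[of w "Suc n"] w0 wN by simp

lemma c_tail: assumes "m \<le> Suc n" shows "(\<Sum>k\<in>{m<..Suc n}. w k - w (Suc k)) = w (Suc m)"
proof -
  have un: "{..Suc n} = {..m} \<union> {m<..Suc n}" using assms by auto
  have "(\<Sum>k\<le>Suc n. w k - w (Suc k)) = (\<Sum>k\<le>m. w k - w (Suc k)) + (\<Sum>k\<in>{m<..Suc n}. w k - w (Suc k))"
    unfolding un by (rule sum.union_disjoint) auto
  moreover have "(\<Sum>k\<le>m. w k - w (Suc k)) = w 0 - w (Suc m)" by (rule sum_telescope)
  ultimately show ?thesis using c_sum w0 by simp
qed

lemma cj: "w j - w (Suc j) = -1"
  using w_left[of j] w_right[of "Suc j"] j1 jn by (simp add: bb_def)

lemma sj: "w (Suc j) = (1 - beta j) / 2"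
  using w_right[of "Suc j"] jn by (simp add: bb_def)

lemma c_cond:
  assumes m: "m \<le> Suc n" "m \<noteq> j" "w m - w (Suc m) < 0"
  shows "w (Suc m) \<le> 0 \<or> w (Suc m) \<ge> - (w m - w (Suc m))"
proof (cases "m < j")
  case True
  have "w (Suc m) = - (1 + beta (Suc m)) / 2" using w_left[of "Suc m"] True by (simp add: bb_def)
  moreover have "-1 \<le> beta (Suc m)" using beta_range[of "Suc m"] True jn by simp
  ultimately show ?thesis by simp
next
  case False
  hence mj: "j < m" using m by simp
  have "w m = (1 - beta (m - 1)) / 2" using w_right[of m] mj m by (simp add: bb_def)
  moreover have "beta (m - 1) \<le> 1" using beta_range[of "m - 1"] mj m j1 by simp
  ultimately show ?thesis by simp
qed


lemma crit_char:
  "nonreal_crit_points n Vs V tau chi = {z. Im z \<noteq> 0 \<and> Lam z = of_real (chi - V tau / 2)}"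
proof (intro set_eqI iffI)
  fix z assume "z \<in> nonreal_crit_points n Vs V tau chi"
  hence z: "Im z \<noteq> 0" and d0: "(S_fun n Vs V tau chi has_field_derivative 0) (at z)"
    by (auto simp: nonreal_crit_points_def)
  have "(Lam z - of_real (chi - V tau / 2)) / z = 0" using DERIV_unique[OF S_deriv[OF z] d0] .
  moreover have "z \<noteq> 0" using z by auto
  ultimately have "Lam z = of_real (chi - V tau / 2)" by simp
  thus "z \<in> {z. Im z \<noteq> 0 \<and> Lam z = of_real (chi - V tau / 2)}" using z by simp
next
  fix z assume "z \<in> {z. Im z \<noteq> 0 \<and> Lam z = of_real (chi - V tau / 2)}"
  hence z: "Im z \<noteq> 0" and L: "Lam z = of_real (chi - V tau / 2)" by auto
  have "(S_fun n Vs V tau chi has_field_derivative 0) (at z)" using S_deriv[OF z, of chi] L by simp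
  thus "z \<in> nonreal_crit_points n Vs V tau chi" using z by (simp add: nonreal_crit_points_def)
qed

lemma main:
  "\<forall>\<^sub>F chi in at_top.
     (if beta j = 1 \<or> beta j = -1
      then nonreal_crit_points n Vs V tau chi = {}
      else (\<exists>w. Im w \<noteq> 0 \<and> nonreal_crit_points n Vs V tau chi = {w, cnj w}))"
proof -
  define G where "G z = (\<Sum>k\<le>Suc n. of_real (w k - w (Suc k)) * Ln (z - of_real (exp (q k))))" for z
  have sjt: "(\<Sum>k\<in>{j<..Suc n}. w k - w (Suc k)) = (1 - beta j) / 2"
    using c_tail[of j] sj jn by simp
  have br: "-1 \<le> beta j" "beta j \<le> 1" using beta_range[of j] j1 jn by auto
  have AC: "\<exists>Y0. \<forall>Y\<ge>Y0. (if (\<Sum>k\<in>{j<..Suc n}. w k - w (Suc k)) = 0 \<or> (\<Sum>k\<in>{j<..Suc n}. w k - w (Suc k)) = 1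
      then (\<forall>z. Im z > 0 \<longrightarrow> (\<Sum>k\<le>Suc n. of_real (w k - w (Suc k)) * Ln (z - of_real (exp (q k)))) \<noteq> of_real Y)
      else (\<exists>!z. Im z > 0 \<and> (\<Sum>k\<le>Suc n. of_real (w k - w (Suc k)) * Ln (z - of_real (exp (q k)))) = of_real Y))"
  proof (rule abstract_count[where c="\<lambda>k. w k - w (Suc k)" and p="\<lambda>k. exp (q k)" and N="Suc n" and j=j])
    show "exp (q k) < exp (q (Suc k))" if "k < Suc n" for k using q_mono[OF that] by simp
    show "(\<Sum>k\<le>Suc n. w k - w (Suc k)) = 0" by (rule c_sum)
    show "j \<le> Suc n" using jn by simp
    show "w j - w (Suc j) = -1" by (rule cj)
    show "0 \<le> (\<Sum>k\<in>{j<..Suc n}. w k - w (Suc k))" "(\<Sum>k\<in>{j<..Suc n}. w k - w (Suc k)) \<le> 1"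
      unfolding sjt using br by auto
    fix m assume m: "m \<le> Suc n" "m \<noteq> j" "w m - w (Suc m) < 0"
    show "(\<Sum>k\<in>{m<..Suc n}. w k - w (Suc k)) \<le> 0 \<or> - (w m - w (Suc m)) \<le> (\<Sum>k\<in>{m<..Suc n}. w k - w (Suc k))"
      unfolding c_tail[OF m(1)] using c_cond[OF m] by simp
  qed
  then obtain Y0 where Y0: "\<And>Y. Y \<ge> Y0 \<Longrightarrow> (if (1 - beta j) / 2 = 0 \<or> (1 - beta j) / 2 = 1
      then (\<forall>z. Im z > 0 \<longrightarrow> G z \<noteq> of_real Y)
      else (\<exists>!z. Im z > 0 \<and> G z = of_real Y))"
    unfolding sjt G_def by blast
  show ?thesis
  proof (rule eventually_mono[OF eventually_ge_at_top[of "Y0 + K + V tau / 2"]])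
    fix chi assume chi: "Y0 + K + V tau / 2 \<le> chi"
    define X where "X = chi - V tau / 2"
    define Y where "Y = X - K"
    have YY: "Y \<ge> Y0" using chi by (simp add: Y_def X_def)
    have up: "Lam z = of_real X \<longleftrightarrow> G z = of_real Y" if "Im z > 0" for z
    proof -
      have "Lam z = G z + of_real K" using Lam_upper[OF that] by (simp add: G_def)
      thus ?thesis unfolding Y_def of_real_diff by (auto simp: eq_diff_eq)
    qed
    have low: "Lam z = of_real X \<longleftrightarrow> Lam (cnj z) = of_real X" if "Im z \<noteq> 0" for z
    proof -
      have "Lam (cnj z) = cnj (Lam z)" by (rule LamF_cnj[OF that])
      thus ?thesis by (metis complex_cnj_complex_of_real complex_cnj_cnj)
    qed
    have CP: "nonreal_crit_points n Vs V tau chi = {z. Im z \<noteq> 0 \<and> Lam z = of_real X}"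
      unfolding crit_char X_def ..
    have mem: "z \<in> nonreal_crit_points n Vs V tau chi \<longleftrightarrow>
        (Im z > 0 \<and> G z = of_real Y) \<or> (Im z < 0 \<and> G (cnj z) = of_real Y)" for z
    proof (cases "Im z > 0")
      case True thus ?thesis unfolding CP using up[OF True] by auto
    next
      case False
      show ?thesis
      proof (cases "Im z = 0")
        case True thus ?thesis unfolding CP using False by auto
      next
        case False2: False
        hence "Im z < 0" using False by simp
        hence "Im (cnj z) > 0" by simp
        thus ?thesis unfolding CP using low[OF False2] up[of "cnj z"] False False2 by auto
      qed
    qed
    show "if beta j = 1 \<or> beta j = -1
      then nonreal_crit_points n Vs V tau chi = {}
      else (\<exists>w. Im w \<noteq> 0 \<and> nonreal_crit_points n Vs V tau chi = {w, cnj w})"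
    proof (cases "beta j = 1 \<or> beta j = -1")
      case True
      hence none: "\<forall>z. Im z > 0 \<longrightarrow> G z \<noteq> of_real Y" using Y0[OF YY] by auto
      have "nonreal_crit_points n Vs V tau chi = {}"
      proof (rule equals0I)
        fix z assume "z \<in> nonreal_crit_points n Vs V tau chi"
        hence "(Im z > 0 \<and> G z = of_real Y) \<or> (Im z < 0 \<and> G (cnj z) = of_real Y)" using mem by blast
        thus False using none[rule_format, of z] none[rule_format, of "cnj z"] by auto
      qed
      thus ?thesis using True by simp
    next
      case False
      hence "\<not> ((1 - beta j) / 2 = 0 \<or> (1 - beta j) / 2 = 1)" by auto
      hence "\<exists>!z. Im z > 0 \<and> G z = of_real Y" using Y0[OF YY] by simp
      then obtain z0 where z0: "Im z0 > 0" "G z0 = of_real Y"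
        and z0u: "\<And>z. Im z > 0 \<Longrightarrow> G z = of_real Y \<Longrightarrow> z = z0" by blast
      have "nonreal_crit_points n Vs V tau chi = {z0, cnj z0}"
      proof (intro set_eqI iffI)
        fix z assume "z \<in> nonreal_crit_points n Vs V tau chi"
        hence "(Im z > 0 \<and> G z = of_real Y) \<or> (Im z < 0 \<and> G (cnj z) = of_real Y)" using mem by blast
        thus "z \<in> {z0, cnj z0}"
        proof
          assume "Im z > 0 \<and> G z = of_real Y" thus ?thesis using z0u by auto
        next
          assume h: "Im z < 0 \<and> G (cnj z) = of_real Y"
          hence "cnj z = z0" using z0u[of "cnj z"] by simp
          hence "z = cnj z0" by (metis complex_cnj_cnj)
          thus ?thesis by simp
        qed
      next
        fix z assume "z \<in> {z0, cnj z0}"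
        thus "z \<in> nonreal_crit_points n Vs V tau chi"
          using mem[of z] z0 by auto
      qed
      hence "\<exists>w. Im w \<noteq> 0 \<and> nonreal_crit_points n Vs V tau chi = {w, cnj w}"
        using z0 by (intro exI[of _ z0]) simp
      thus ?thesis using False by simp
    qed
  qed
qed

end


theorem lemma2p2:
  fixes n j :: nat and Vs beta :: "nat \<Rightarrow> real" and V :: "real \<Rightarrow> real" and tau :: real
  assumes "pl_setting n Vs beta V"
    and "1 \<le> j" and "j \<le> n"
    and "Vs (j - 1) < tau" and "tau < Vs j"
  shows "\<forall>\<^sub>F chi in at_top.
           (if beta j = 1 \<or> beta j = -1
            then nonreal_crit_points n Vs V tau chi = {}
            else (\<exists>w. Im w \<noteq> 0 \<and> nonreal_crit_points n Vs V tau chi = {w, cnj w}))"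
proof -
  interpret setting n j Vs beta V tau using assms by unfold_locales
  show ?thesis by (rule main)
qed

end
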